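(* Assume the setting, Assumptions 1–2 and the FedAvg algorithm of the context, with $T$ a multiple of $I$, stepsize $\eta=\sqrt{bK/T}$, and $T\ge81L^2I^2bK$. Then for any $b\ge1$ and $I\ge1$, $$\mathbb{E}\|\nabla f(\bar x_a)\|^2\le\frac{2(f(\bar x_1)-f^\ast)}{(bK)^{1/2}T^{1/2}}+\frac{2L\sigma^2}{(bK)^{1/2}T^{1/2}}+\frac{3L^2bK(I-1)}{T}\sigma^2+\frac{5L^2bK(I-1)^2}{T}\zeta^2.$$
   Context: Setting: $K\ge1$ worker nodes. For each $k$, $f^{(k)}(x)=\mathbb{E}_{\xi\sim\mathcal{D}^{(k)}}[f^{(k)}(x;\xi)]$. The objective is $f=\frac1K\sum_kf^{(k)}$, with $f^\ast=\inf f>-\infty$. Assumption 1: $\mathbb{E}\|\nabla f^{(k)}(x;\xi)-\nabla f^{(k)}(y;\xi)\|^2\le L^2\|x-y\|^2$. Assumption 2: $\mathbb{E}[\nabla f^{(k)}(x;\xi)]=\nabla f^{(k)}(x)$, $\mathbb{E}\|\nabla f^{(k)}(x;\xi)-\nabla f^{(k)}(x)\|^2\le\sigma^2$, and $\|\nabla f^{(k)}(x)-\nabla f^{(\ell)}(x)\|^2\le\zeta^2$. Samples are i.i.d., independent across nodes and of the past. FedAvg algorithm. Initialization: $x_1^{(k)}=\bar x_1$ for all $k$. For $t=1,\dots,T$: $d_t^{(k)}=\frac1b\sum_{\xi\in\mathcal{B}_t^{(k)}}\nabla f^{(k)}(x_t^{(k)};\xi)$ with a fresh size-$b$ minibatch,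 and $x_{t+1}^{(k)}=x_t^{(k)}-\eta d_t^{(k)}$. If $t\bmod I=0$, replace $x_{t+1}^{(k)}$ by $\bar x_{t+1}=\frac1K\sum_jx_{t+1}^{(j)}$ for all $k$. Here $\bar x_t=\frac1K\sum_kx_t^{(k)}$. Output: $\bar x_a$, uniform on $\{\bar x_t\}_{t=1}^T$. *)

theory Defs
  imports "HOL-Probability.Probability"
begin

text \<open>Local iterates of FedAvg for a fixed realization xi of the samples.
  fedavg_local G K b eta I x1 xi n k is the local iterate of node k at time n+1,
  i.e. x_{n+1}^{(k)}.\<close>

primrec fedavg_local ::
  "(nat \<Rightarrow> 'a::euclidean_space \<Rightarrow> 'b \<Rightarrow> 'a) \<Rightarrow> nat \<Rightarrow> nat \<Rightarrow> real \<Rightarrow> nat \<Rightarrow> 'a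
    \<Rightarrow> (nat \<Rightarrow> nat \<Rightarrow> nat \<Rightarrow> 'b) \<Rightarrow> nat \<Rightarrow> nat \<Rightarrow> 'a" where
  "fedavg_local G K b eta I x1 xi 0 = (\<lambda>k. x1)"
| "fedavg_local G K b eta I x1 xi (Suc n) =
     (let t = Suc n;
          xt = fedavg_local G K b eta I x1 xi n;
          d = (\<lambda>k. (1 / real b) *\<^sub>R (\<Sum>j<b. G k (xt k) (xi t k j)));
          y = (\<lambda>k. xt k - eta *\<^sub>R d k)
      in if t mod I = 0 then (\<lambda>k. (1 / real K) *\<^sub>R (\<Sum>l<K. y l)) else y)"

definition fedavg_avg ::
  "(nat \<Rightarrow> 'a::euclidean_space \<Rightarrow> 'b \<Rightarrow> 'a) \<Rightarrow> nat \<Rightarrow> nat \<Rightarrow> real \<Rightarrow> nat \<Rightarrow> 'a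
    \<Rightarrow> (nat \<Rightarrow> nat \<Rightarrow> nat \<Rightarrow> 'b) \<Rightarrow> nat \<Rightarrow> 'a" where
  "fedavg_avg G K b eta I x1 xi t =
     (1 / real K) *\<^sub>R (\<Sum>k<K. fedavg_local G K b eta I x1 xi (t - 1) k)"

end

theory Submission
  imports Defs
begin


lemma norm_add_sq: "(norm (a + b))\<^sup>2 = (norm a)\<^sup>2 + 2 * inner a b + (norm (b::'a::real_inner))\<^sup>2"
  by (simp add: power2_norm_eq_inner inner_add_left inner_add_right inner_commute)

lemma norm_diff_sq: "(norm (a - b))\<^sup>2 = (norm a)\<^sup>2 - 2 * inner a b + (norm (b::'a::real_inner))\<^sup>2"
  by (simp add: power2_norm_eq_inner inner_diff_left inner_diff_right inner_commute)

lemma sum_sq_decomp: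
  fixes v :: "nat \<Rightarrow> 'a::real_inner"
  assumes K: "K \<ge> 1"
  defines "vb \<equiv> (1 / real K) *\<^sub>R (\<Sum>k<K. v k)"
  shows "(\<Sum>k<K. (norm (v k - c))\<^sup>2) = (\<Sum>k<K. (norm (v k - vb))\<^sup>2) + real K * (norm (vb - c))\<^sup>2"
proof -
  have s0: "(\<Sum>k<K. v k - vb) = 0"
    using K by (simp add: sum_subtractf vb_def sum_constant_scaleR)
  have "(\<Sum>k<K. (norm (v k - c))\<^sup>2) = (\<Sum>k<K. (norm ((v k - vb) + (vb - c)))\<^sup>2)" by simp
  also have "\<dots> = (\<Sum>k<K. (norm (v k - vb))\<^sup>2 + 2 * inner (v k - vb) (vb - c) + (norm (vb - c))\<^sup>2)"
    by (rule sum.cong) (simp_all only: norm_add_sq)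
  also have "\<dots> = (\<Sum>k<K. (norm (v k - vb))\<^sup>2) + 2 * inner (\<Sum>k<K. v k - vb) (vb - c) + real K * (norm (vb - c))\<^sup>2"
    by (simp add: sum.distrib sum_distrib_left inner_sum_left)
  finally show ?thesis using s0 by simp
qed

lemma var_le:
  fixes v :: "nat \<Rightarrow> 'a::real_inner"
  assumes K: "K \<ge> 1"
  shows "(\<Sum>k<K. (norm (v k - (1 / real K) *\<^sub>R (\<Sum>k<K. v k)))\<^sup>2) \<le> (\<Sum>k<K. (norm (v k - c))\<^sup>2)"
  using sum_sq_decomp[OF K, of v c] by simp

lemma jensen_sq:
  fixes v :: "nat \<Rightarrow> 'a::real_inner"
  assumes K: "K \<ge> 1"
  shows "(norm ((1 / real K) *\<^sub>R (\<Sum>k<K. v k)))\<^sup>2 \<le> (1 / real K) * (\<Sum>k<K. (norm (v k))\<^sup>2)"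
proof -
  have "real K * (norm ((1 / real K) *\<^sub>R (\<Sum>k<K. v k)))\<^sup>2 \<le> (\<Sum>k<K. (norm (v k))\<^sup>2)"
    using sum_sq_decomp[OF K, of v 0] by (simp add: sum_nonneg)
  then show ?thesis using K by (simp add: field_simps)
qed

lemma descent:
  fixes F :: "'a::real_inner \<Rightarrow> real"
  assumes dF: "\<And>x. (F has_derivative (\<lambda>h. g x \<bullet> h)) (at x)"
    and lip: "\<And>x y. norm (g x - g y) \<le> L * norm (x - y)"
  shows "F y \<le> F x + g x \<bullet> (y - x) + L / 2 * (norm (y - x))\<^sup>2"
proof -
  define d where "d = y - x"
  define \<psi> where "\<psi> s = F (x + s *\<^sub>R d) - s * (g x \<bullet> d) - L * s\<^sup>2 / 2 * (norm d)\<^sup>2" for s :: real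
  have D: "DERIV \<psi> s :> (g (x + s *\<^sub>R d) \<bullet> d - g x \<bullet> d - L * s * (norm d)\<^sup>2)" for s
  proof -
    have l: "((\<lambda>s. x + s *\<^sub>R d) has_derivative (\<lambda>h. h *\<^sub>R d)) (at s)"
      by (auto intro!: derivative_eq_intros)
    have c: "((\<lambda>s. F (x + s *\<^sub>R d)) has_derivative (\<lambda>h. g (x + s *\<^sub>R d) \<bullet> (h *\<^sub>R d))) (at s)"
      using has_derivative_compose[OF l dF] by simp
    have c': "((\<lambda>s. F (x + s *\<^sub>R d)) has_real_derivative (g (x + s *\<^sub>R d) \<bullet> d)) (at s)"
      using c by (simp add: has_field_derivative_def mult.commute[of _ "g (x + s *\<^sub>R d) \<bullet> d"])
    show ?thesis unfolding \<psi>_def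
      by (rule derivative_eq_intros c' | simp)+
  qed
  have "\<psi> 1 \<le> \<psi> 0"
  proof (rule DERIV_nonpos_imp_nonincreasing[of 0 1])
    fix s :: real assume s: "0 \<le> s" "s \<le> 1"
    have "g (x + s *\<^sub>R d) \<bullet> d - g x \<bullet> d = (g (x + s *\<^sub>R d) - g x) \<bullet> d" by (simp add: inner_diff_left)
    also have "\<dots> \<le> norm (g (x + s *\<^sub>R d) - g x) * norm d" by (rule norm_cauchy_schwarz)
    also have "\<dots> \<le> L * norm (s *\<^sub>R d) * norm d"
      using lip[of "x + s *\<^sub>R d" x] by (intro mult_right_mono) auto
    also have "\<dots> = L * s * (norm d)\<^sup>2" using s by (simp add: power2_eq_square)
    finally show "\<exists>y. DERIV \<psi> s :> y \<and> y \<le> 0" using D by (intro exI conjI) auto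
  qed simp
  then show ?thesis unfolding \<psi>_def d_def by (simp add: algebra_simps)
qed


lemma L2_mean_bound:
  fixes h :: "'m \<Rightarrow> 'a::euclidean_space"
  assumes P: "prob_space N" and hi: "integrable N h"
    and h2: "(\<integral>\<^sup>+ s. ennreal ((norm (h s))\<^sup>2) \<partial>N) \<le> ennreal (B\<^sup>2)" and B: "B \<ge> 0"
  shows "norm (integral\<^sup>L N h) \<le> B"
proof -
  interpret prob_space N by fact
  have hm: "h \<in> borel_measurable N" using hi by auto
  have key: "norm (integral\<^sup>L N h) \<le> B\<^sup>2 / (2*c) + c / 2" if c: "c > 0" for c
  proof -
    have "(\<integral>\<^sup>+ s. ennreal (norm (h s)) \<partial>N) \<le> (\<integral>\<^sup>+ s. ennreal ((norm (h s))\<^sup>2 / (2*c) + c/2) \<partial>N)"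
    proof (rule nn_integral_mono)
      fix s
      have "0 \<le> (norm (h s) - c)\<^sup>2" by simp
      then have "norm (h s) \<le> (norm (h s))\<^sup>2 / (2*c) + c/2"
        using c by (simp add: field_simps power2_eq_square)
      then show "ennreal (norm (h s)) \<le> ennreal ((norm (h s))\<^sup>2 / (2*c) + c/2)"
        by (simp add: ennreal_leI)
    qed
    also have "\<dots> = (\<integral>\<^sup>+ s. ennreal ((norm (h s))\<^sup>2) * ennreal (1/(2*c)) + ennreal (c/2) \<partial>N)"
      using c by (intro nn_integral_cong) (simp add: ennreal_plus[symmetric] ennreal_mult[symmetric] divide_simps)
    also have "\<dots> = (\<integral>\<^sup>+ s. ennreal ((norm (h s))\<^sup>2) \<partial>N) * ennreal (1/(2*c)) + ennreal (c/2)"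
      using hm by (simp add: nn_integral_add nn_integral_multc emeasure_space_1)
    also have "\<dots> \<le> ennreal (B\<^sup>2) * ennreal (1/(2*c)) + ennreal (c/2)"
      by (intro add_mono mult_right_mono h2) auto
    also have "\<dots> = ennreal (B\<^sup>2 / (2*c) + c/2)"
      using c by (simp add: ennreal_plus[symmetric] ennreal_mult[symmetric] divide_simps)
    finally have nn: "(\<integral>\<^sup>+ s. ennreal (norm (h s)) \<partial>N) \<le> ennreal (B\<^sup>2 / (2*c) + c/2)" .
    have "norm (integral\<^sup>L N h) \<le> (\<integral>s. norm (h s) \<partial>N)" by (rule integral_norm_bound)
    also have "\<dots> = enn2real (\<integral>\<^sup>+ s. ennreal (norm (h s)) \<partial>N)"
      using hm by (intro integral_eq_nn_integral) auto
    also have "\<dots> \<le> B\<^sup>2 / (2*c) + c/2"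
      using nn c by (intro enn2real_leI) (auto simp: add_pos_nonneg)
    finally show ?thesis .
  qed
  show ?thesis
  proof (cases "B > 0")
    case True
    from key[OF True] show ?thesis using True by (simp add: power2_eq_square)
  next
    case False
    then have B0: "B = 0" using B by simp
    have "norm (integral\<^sup>L N h) \<le> e" if "e > 0" for e
      using key[of "2*e"] that B0 by simp
    then show ?thesis using B0 by (meson dense_le_bounded not_le)
  qed
qed


lemma ab_le: fixes a b :: real assumes "0 \<le> a" "0 \<le> b" shows "a * b \<le> a\<^sup>2 + b\<^sup>2"
proof -
  have "2 * (a * b) \<le> a\<^sup>2 + b\<^sup>2" using sum_squares_bound[of a b] by (simp add: mult.assoc)
  then show ?thesis using mult_nonneg_nonneg[OF assms] by linarith
qed

locale noise_prod =
  fixes Mi :: "'ix \<Rightarrow> 'bx measure" and B :: "'ix set" and E :: "'ix \<Rightarrow> 'bx \<Rightarrow> 'ax::euclidean_space"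
    and s2 :: real
  assumes s2_nn: "s2 \<ge> 0" and P: "\<And>l. prob_space (Mi l)" and fin: "finite B"
    and Em: "\<And>i. i\<in>B \<Longrightarrow> E i \<in> borel_measurable (Mi i)"
    and Eint: "\<And>i. i\<in>B \<Longrightarrow> integrable (Mi i) (E i)"
    and E0: "\<And>i. i\<in>B \<Longrightarrow> integral\<^sup>L (Mi i) (E i) = 0"
    and Ev: "\<And>i. i\<in>B \<Longrightarrow> (\<integral>\<^sup>+s. ennreal ((norm (E i s))\<^sup>2) \<partial>Mi i) \<le> ennreal s2"
begin

lemma finm: "finite_measure (Mi l)"
  using P[of l] by (simp add: prob_space_def)

lemma psf: "product_sigma_finite Mi"
  by (simp add: P product_sigma_finite_def prob_space_imp_sigma_finite)

abbreviation (input) PB where "PB \<equiv> PiM B Mi"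

lemma PB_prob: "prob_space PB"
  by (simp add: P prob_space_PiM)

lemma comp_meas: "i \<in> B \<Longrightarrow> (\<lambda>y. y i) \<in> measurable PB (Mi i)"
  by (rule measurable_component_singleton)

lemma distr_comp: "i \<in> B \<Longrightarrow> distr PB (Mi i) (\<lambda>y. y i) = Mi i"
  by (rule distr_PiM_component) (auto simp: P)

lemma integrable_comp:
  fixes \<phi> :: "'bx \<Rightarrow> 'c::{banach, second_countable_topology}"
  assumes i: "i \<in> B" and "integrable (Mi i) \<phi>"
  shows "integrable PB (\<lambda>y. \<phi> (y i))"
proof -
  have m: "\<phi> \<in> borel_measurable (Mi i)" using assms by auto
  show ?thesis
    using integrable_distr_eq[OF comp_meas[OF i] m] assms distr_comp[OF i] by simp
qed

lemma integral_comp: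
  fixes \<phi> :: "'bx \<Rightarrow> 'c::{banach, second_countable_topology}"
  assumes i: "i \<in> B" and m: "\<phi> \<in> borel_measurable (Mi i)"
  shows "(\<integral>y. \<phi> (y i) \<partial>PB) = integral\<^sup>L (Mi i) \<phi>"
  using integral_distr[OF comp_meas[OF i] m] distr_comp[OF i] by simp

lemma nn_integral_comp:
  assumes i: "i \<in> B" and m: "\<phi> \<in> borel_measurable (Mi i)"
  shows "(\<integral>\<^sup>+y. \<phi> (y i) \<partial>PB) = integral\<^sup>N (Mi i) \<phi>"
proof -
  have "integral\<^sup>N (distr PB (Mi i) (\<lambda>y. y i)) \<phi> = (\<integral>\<^sup>+y. \<phi> (y i) \<partial>PB)"
    by (rule nn_integral_distr[OF comp_meas[OF i]]) (simp add: distr_comp[OF i] m)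
  then show ?thesis using distr_comp[OF i] by simp
qed

lemma sq_int: "i \<in> B \<Longrightarrow> integrable (Mi i) (\<lambda>s. (norm (E i s))\<^sup>2)"
proof -
  assume i: "i \<in> B"
  have m: "(\<lambda>s. (norm (E i s))\<^sup>2) \<in> borel_measurable (Mi i)" using Em[OF i] by measurable
  show ?thesis
    by (rule integrableI_bounded[OF m]) (use Ev[OF i] in \<open>simp add: le_less_trans[OF _ ennreal_less_top]\<close>)
qed

lemma sq_int_le: "i \<in> B \<Longrightarrow> (\<integral>s. (norm (E i s))\<^sup>2 \<partial>Mi i) \<le> s2"
proof -
  assume i: "i \<in> B"
  have "ennreal (\<integral>s. (norm (E i s))\<^sup>2 \<partial>Mi i) = (\<integral>\<^sup>+s. ennreal ((norm (E i s))\<^sup>2) \<partial>Mi i)"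
    by (rule nn_integral_eq_integral[symmetric]) (auto intro: sq_int[OF i])
  also have "\<dots> \<le> ennreal s2" using Ev[OF i] .
  finally show ?thesis
    using s2_nn by (simp add: ennreal_le_iff)
qed

abbreviation "e i y \<equiv> E i (y i)"

lemma e_meas: "i \<in> B \<Longrightarrow> (\<lambda>y. e i y) \<in> borel_measurable PB"
  using measurable_comp[OF comp_meas Em] by (simp add: comp_def)

lemma e_int: "i \<in> B \<Longrightarrow> integrable PB (e i)"
  using integrable_comp[OF _ Eint] by simp

lemma e_integral: "i \<in> B \<Longrightarrow> integral\<^sup>L PB (e i) = 0"
  using integral_comp[OF _ Em] E0 by simp

lemma e_sq_int: "i \<in> B \<Longrightarrow> integrable PB (\<lambda>y. (norm (e i y))\<^sup>2)"
  using integrable_comp[OF _ sq_int] by simp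

lemma e_sq_le: "i \<in> B \<Longrightarrow> (\<integral>y. (norm (e i y))\<^sup>2 \<partial>PB) \<le> s2"
proof -
  assume i: "i \<in> B"
  have "(\<integral>y. (norm (e i y))\<^sup>2 \<partial>PB) = (\<integral>s. (norm (E i s))\<^sup>2 \<partial>Mi i)"
    using Em[OF i] by (intro integral_comp[OF i]) measurable
  then show ?thesis using sq_int_le[OF i] by simp
qed

lemma inner_int: "i \<in> B \<Longrightarrow> i' \<in> B \<Longrightarrow> integrable PB (\<lambda>y. inner (e i y) (e i' y))"
proof -
  assume i: "i \<in> B" and i': "i' \<in> B"
  have m: "(\<lambda>y. inner (e i y) (e i' y)) \<in> borel_measurable PB"
    using e_meas[OF i] e_meas[OF i'] by measurable
  show ?thesis
  proof (rule Bochner_Integration.integrable_bound[OF _ m])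
    show "integrable PB (\<lambda>y. (norm (e i y))\<^sup>2 + (norm (e i' y))\<^sup>2)"
      using e_sq_int[OF i] e_sq_int[OF i'] by simp
    show "AE y in PB. norm (inner (e i y) (e i' y)) \<le> norm ((norm (e i y))\<^sup>2 + (norm (e i' y))\<^sup>2)"
    proof (intro AE_I2)
      fix y
      have "norm (inner (e i y) (e i' y)) \<le> norm (e i y) * norm (e i' y)"
        using Cauchy_Schwarz_ineq2 by simp
      also have "\<dots> \<le> (norm (e i y))\<^sup>2 + (norm (e i' y))\<^sup>2"
        by (rule ab_le) auto
      finally show "norm (inner (e i y) (e i' y)) \<le> norm ((norm (e i y))\<^sup>2 + (norm (e i' y))\<^sup>2)"
        by simp
    qed
  qed
qed

lemma cross_zero:
  assumes i: "i \<in> B" and i': "i' \<in> B" and ne: "i \<noteq> i'"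
  shows "(\<integral>y. inner (e i y) (e i' y) \<partial>PB) = 0"
proof -
  have comp: "(\<integral>y. (e i y \<bullet> u) * (e i' y \<bullet> u) \<partial>PB) = 0" for u :: 'ax
  proof -
    define f where "f l = (if l = i then (\<lambda>s. E i s \<bullet> u) else if l = i' then (\<lambda>s. E i' s \<bullet> u) else (\<lambda>s. 1::real))" for l
    have fi: "integrable (Mi l) (f l)" if "l \<in> B" for l
      using that Eint[OF i] Eint[OF i'] by (auto simp: f_def finite_measure.integrable_const[OF finm])
    have pr: "(\<Prod>l\<in>B. f l (y l)) = (e i y \<bullet> u) * (e i' y \<bullet> u)" for y
    proof -
      have "(\<Prod>l\<in>B. f l (y l)) = f i (y i) * (\<Prod>l\<in>B - {i}. f l (y l))"
        by (rule prod.remove) (use fin i in auto)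
      also have "(\<Prod>l\<in>B - {i}. f l (y l)) = f i' (y i') * (\<Prod>l\<in>B - {i} - {i'}. f l (y l))"
        by (rule prod.remove) (use fin i' ne in auto)
      also have "(\<Prod>l\<in>B - {i} - {i'}. f l (y l)) = 1"
        by (rule prod.neutral) (auto simp: f_def)
      finally show ?thesis using ne by (simp add: f_def)
    qed
    have "(\<integral>y. (e i y \<bullet> u) * (e i' y \<bullet> u) \<partial>PB) = (\<integral>y. (\<Prod>l\<in>B. f l (y l)) \<partial>PB)"
      by (simp add: pr)
    also have "\<dots> = (\<Prod>l\<in>B. integral\<^sup>L (Mi l) (f l))"
      by (rule product_sigma_finite.product_integral_prod[OF psf fin fi])
    also have "\<dots> = integral\<^sup>L (Mi i) (f i) * (\<Prod>l\<in>B - {i}. integral\<^sup>L (Mi l) (f l))"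
      by (rule prod.remove) (use fin i in auto)
    also have "integral\<^sup>L (Mi i) (f i) = 0"
      using E0[OF i] Eint[OF i] by (simp add: f_def)
    finally show ?thesis by simp
  qed
  have "(\<integral>y. inner (e i y) (e i' y) \<partial>PB) = (\<integral>y. (\<Sum>u\<in>Basis. (e i y \<bullet> u) * (e i' y \<bullet> u)) \<partial>PB)"
    by (rule Bochner_Integration.integral_cong[OF refl]) (rule euclidean_inner)
  also have "\<dots> = (\<Sum>u\<in>Basis. (\<integral>y. (e i y \<bullet> u) * (e i' y \<bullet> u) \<partial>PB))"
  proof (rule Bochner_Integration.integral_sum)
    fix u :: 'ax assume "u \<in> Basis"
    have "integrable PB (\<lambda>y. inner (e i y) (e i' y))" by (rule inner_int[OF i i'])
    show "integrable PB (\<lambda>y. (e i y \<bullet> u) * (e i' y \<bullet> u))"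
    proof (rule Bochner_Integration.integrable_bound[of _ "\<lambda>y. (norm (e i y))\<^sup>2 + (norm (e i' y))\<^sup>2"])
      show "integrable PB (\<lambda>y. (norm (e i y))\<^sup>2 + (norm (e i' y))\<^sup>2)"
        using e_sq_int[OF i] e_sq_int[OF i'] by simp
      show "(\<lambda>y. (e i y \<bullet> u) * (e i' y \<bullet> u)) \<in> borel_measurable PB"
        using e_meas[OF i] e_meas[OF i'] by measurable
      show "AE y in PB. norm ((e i y \<bullet> u) * (e i' y \<bullet> u)) \<le> norm ((norm (e i y))\<^sup>2 + (norm (e i' y))\<^sup>2)"
      proof (intro AE_I2)
        fix y
        have u1: "norm u = 1" using \<open>u \<in> Basis\<close> by simp
        have a: "\<bar>e i y \<bullet> u\<bar> \<le> norm (e i y)" using Basis_le_norm[OF \<open>u \<in> Basis\<close>] by simp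
        have b: "\<bar>e i' y \<bullet> u\<bar> \<le> norm (e i' y)" using Basis_le_norm[OF \<open>u \<in> Basis\<close>] by simp
        have "norm ((e i y \<bullet> u) * (e i' y \<bullet> u)) \<le> norm (e i y) * norm (e i' y)"
          using a b by (simp add: abs_mult mult_mono')
        also have "\<dots> \<le> (norm (e i y))\<^sup>2 + (norm (e i' y))\<^sup>2"
          by (rule ab_le) auto
        finally show "norm ((e i y \<bullet> u) * (e i' y \<bullet> u)) \<le> norm ((norm (e i y))\<^sup>2 + (norm (e i' y))\<^sup>2)"
          by simp
      qed
    qed
  qed
  also have "\<dots> = 0" by (simp add: comp)
  finally show ?thesis .
qed

lemma sum_sq_int: "J \<subseteq> B \<Longrightarrow> integrable PB (\<lambda>y. (norm (\<Sum>i\<in>J. e i y))\<^sup>2)"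
proof -
  assume J: "J \<subseteq> B"
  have eq: "(norm (\<Sum>i\<in>J. e i y))\<^sup>2 = (\<Sum>i\<in>J. \<Sum>i'\<in>J. inner (e i y) (e i' y))" for y
    by (simp add: power2_norm_eq_inner inner_sum_left inner_sum_right) (rule sum.swap)
  have "integrable PB (\<lambda>y. \<Sum>i\<in>J. \<Sum>i'\<in>J. inner (e i y) (e i' y))"
  proof (rule Bochner_Integration.integrable_sum)
    fix i assume i: "i \<in> J"
    show "integrable PB (\<lambda>y. \<Sum>i'\<in>J. inner (e i y) (e i' y))"
    proof (rule Bochner_Integration.integrable_sum)
      fix i' assume i': "i' \<in> J"
      show "integrable PB (\<lambda>y. inner (e i y) (e i' y))" using i i' J by (intro inner_int) auto
    qed
  qed
  then show ?thesis unfolding eq .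
qed

lemma sum_sq_le: "J \<subseteq> B \<Longrightarrow> (\<integral>y. (norm (\<Sum>i\<in>J. e i y))\<^sup>2 \<partial>PB) \<le> real (card J) * s2"
proof -
  assume J: "J \<subseteq> B"
  have fJ: "finite J" using J fin finite_subset by blast
  have eq: "(norm (\<Sum>i\<in>J. e i y))\<^sup>2 = (\<Sum>i\<in>J. \<Sum>i'\<in>J. inner (e i y) (e i' y))" for y
    by (simp add: power2_norm_eq_inner inner_sum_left inner_sum_right) (rule sum.swap)
  have "(\<integral>y. (norm (\<Sum>i\<in>J. e i y))\<^sup>2 \<partial>PB) = (\<Sum>i\<in>J. \<Sum>i'\<in>J. (\<integral>y. inner (e i y) (e i' y) \<partial>PB))"
    unfolding eq
  proof (subst Bochner_Integration.integral_sum)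
    fix i assume i: "i \<in> J"
    show "integrable PB (\<lambda>y. \<Sum>i'\<in>J. inner (e i y) (e i' y))"
    proof (rule Bochner_Integration.integrable_sum)
      fix i' assume i': "i' \<in> J"
      show "integrable PB (\<lambda>y. inner (e i y) (e i' y))" using i i' J by (intro inner_int) auto
    qed
  next
    show "(\<Sum>i\<in>J. \<integral>y. (\<Sum>i'\<in>J. inner (e i y) (e i' y)) \<partial>PB) = (\<Sum>i\<in>J. \<Sum>i'\<in>J. (\<integral>y. inner (e i y) (e i' y) \<partial>PB))"
    proof (rule sum.cong[OF refl], rule Bochner_Integration.integral_sum)
      fix i i' assume "i \<in> J" "i' \<in> J"
      then show "integrable PB (\<lambda>y. inner (e i y) (e i' y))" using J by (intro inner_int) auto
    qed
  qed
  also have "\<dots> = (\<Sum>i\<in>J. (\<integral>y. (norm (e i y))\<^sup>2 \<partial>PB))"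
  proof (rule sum.cong[OF refl])
    fix i assume i: "i \<in> J"
    have "(\<Sum>i'\<in>J. (\<integral>y. inner (e i y) (e i' y) \<partial>PB)) = (\<integral>y. inner (e i y) (e i y) \<partial>PB)
          + (\<Sum>i'\<in>J - {i}. (\<integral>y. inner (e i y) (e i' y) \<partial>PB))"
      by (rule sum.remove) (use fJ i in auto)
    also have "(\<Sum>i'\<in>J - {i}. (\<integral>y. inner (e i y) (e i' y) \<partial>PB)) = 0"
      using J i by (intro sum.neutral) (auto intro!: cross_zero)
    finally show "(\<Sum>i'\<in>J. (\<integral>y. inner (e i y) (e i' y) \<partial>PB)) = (\<integral>y. (norm (e i y))\<^sup>2 \<partial>PB)"
      by (simp add: power2_norm_eq_inner)
  qed
  also have "\<dots> \<le> (\<Sum>i\<in>J. s2)"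
    using J by (intro sum_mono e_sq_le) auto
  finally show ?thesis by simp
qed

end


locale fed =
  fixes S :: "'b measure" and D :: "nat \<Rightarrow> 'b measure"
    and G :: "nat \<Rightarrow> 'a::euclidean_space \<Rightarrow> 'b \<Rightarrow> 'a"
    and gf :: "nat \<Rightarrow> 'a \<Rightarrow> 'a" and f :: "nat \<Rightarrow> 'a \<Rightarrow> real"
    and K b I :: nat and L \<sigma> \<zeta> \<eta> :: real
  assumes K: "K \<ge> 1" and b: "b \<ge> 1" and I: "I \<ge> 1" and L: "L \<ge> 0" and eta: "\<eta> \<ge> 0"
    and etaLI: "\<eta> * L * real I \<le> 1/9"
    and D_prob: "\<And>k. k < K \<Longrightarrow> prob_space (D k)"
    and D_sets: "\<And>k. k < K \<Longrightarrow> sets (D k) = sets S"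
    and G_meas: "\<And>k. k < K \<Longrightarrow> (\<lambda>p. G k (fst p) (snd p)) \<in> borel_measurable (borel \<Otimes>\<^sub>M S)"
    and f_grad: "\<And>k x. k < K \<Longrightarrow> (f k has_derivative (\<lambda>h. gf k x \<bullet> h)) (at x)"
    and A1: "\<And>k x y. k < K \<Longrightarrow>
       (\<integral>\<^sup>+ s. ennreal ((norm (G k x s - G k y s))\<^sup>2) \<partial>D k) \<le> ennreal (L\<^sup>2 * (norm (x - y))\<^sup>2)"
    and A2_int: "\<And>k x. k < K \<Longrightarrow> integrable (D k) (G k x)"
    and A2_unb: "\<And>k x. k < K \<Longrightarrow> (\<integral>s. G k x s \<partial>D k) = gf k x"
    and A2_var: "\<And>k x. k < K \<Longrightarrow>
       (\<integral>\<^sup>+ s. ennreal ((norm (G k x s - gf k x))\<^sup>2) \<partial>D k) \<le> ennreal (\<sigma>\<^sup>2)"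
    and A2_het: "\<And>k l x. k < K \<Longrightarrow> l < K \<Longrightarrow> (norm (gf k x - gf l x))\<^sup>2 \<le> \<zeta>\<^sup>2"
begin

definition avg :: "(nat \<Rightarrow> 'a) \<Rightarrow> 'a" where "avg x = (1 / real K) *\<^sub>R (\<Sum>k<K. x k)"
definition Fb :: "'a \<Rightarrow> real" where "Fb z = (1 / real K) * (\<Sum>k<K. f k z)"
definition gb :: "'a \<Rightarrow> 'a" where "gb z = (1 / real K) *\<^sub>R (\<Sum>k<K. gf k z)"
definition dr :: "(nat \<Rightarrow> 'a) \<Rightarrow> real" where "dr x = (1 / real K) * (\<Sum>k<K. (norm (x k - avg x))\<^sup>2)"
definition step :: "nat \<Rightarrow> (nat \<Rightarrow> 'a) \<Rightarrow> (nat \<Rightarrow> nat \<Rightarrow> 'b) \<Rightarrow> nat \<Rightarrow> 'a" where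
  "step t x y = (let d = (\<lambda>k. (1 / real b) *\<^sub>R (\<Sum>j<b. G k (x k) (y k j)));
                     z = (\<lambda>k. x k - \<eta> *\<^sub>R d k)
                 in if t mod I = 0 then (\<lambda>k. (1 / real K) *\<^sub>R (\<Sum>l<K. z l)) else z)"
definition Dm :: "nat \<times> nat \<times> nat \<Rightarrow> 'b measure" where
  "Dm i = (if fst (snd i) < K then D (fst (snd i)) else D 0)"
definition Bk :: "nat \<Rightarrow> (nat \<times> nat \<times> nat) set" where "Bk t = {t} \<times> {..<K} \<times> {..<b}"

lemma Kpos: "real K > 0" using K by simp

lemma Dm_prob: "prob_space (Dm l)"
  using D_prob K by (auto simp: Dm_def)

lemma G_meas1: "k < K \<Longrightarrow> G k c \<in> borel_measurable (D k)"
proof -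
  assume k: "k < K"
  have "(\<lambda>s. (c, s)) \<in> measurable S (borel \<Otimes>\<^sub>M S)" by measurable
  from measurable_comp[OF this G_meas[OF k]] have "G k c \<in> borel_measurable S" by (simp add: comp_def)
  moreover have "(borel_measurable (D k) :: ('b \<Rightarrow> 'a) set) = borel_measurable S"
    by (rule measurable_cong_sets[OF D_sets[OF k] refl])
  ultimately show ?thesis by (simp only:)
qed

lemma gf_lip: "k < K \<Longrightarrow> norm (gf k x - gf k y) \<le> L * norm (x - y)"
proof -
  assume k: "k < K"
  have i: "integrable (D k) (\<lambda>s. G k x s - G k y s)" using A2_int[OF k] by auto
  have "gf k x - gf k y = (\<integral>s. G k x s - G k y s \<partial>D k)"
    using A2_int[OF k] A2_unb[OF k] by (simp add: Bochner_Integration.integral_diff)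
  also have "norm \<dots> \<le> L * norm (x - y)"
    by (rule L2_mean_bound[OF D_prob[OF k] i]) (use A1[OF k] L in \<open>auto simp: power_mult_distrib\<close>)
  finally show ?thesis .
qed

lemma gb_lip: "norm (gb x - gb y) \<le> L * norm (x - y)"
proof -
  have "gb x - gb y = (1 / real K) *\<^sub>R (\<Sum>k<K. gf k x - gf k y)"
    by (simp add: gb_def sum_subtractf scaleR_diff_right)
  also have "norm \<dots> \<le> (1 / real K) * (\<Sum>k<K. norm (gf k x - gf k y))"
    using norm_sum[of "\<lambda>k. gf k x - gf k y" "{..<K}"] Kpos by (simp add: divide_right_mono)
  also have "\<dots> \<le> (1 / real K) * (\<Sum>k<K. L * norm (x - y))"
    using Kpos by (intro mult_left_mono sum_mono gf_lip) auto
  also have "\<dots> = L * norm (x - y)" using Kpos by simp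
  finally show ?thesis .
qed

lemma Fb_deriv: "(Fb has_derivative (\<lambda>h. gb z \<bullet> h)) (at z)"
proof -
  have "((\<lambda>x. \<Sum>k<K. f k x) has_derivative (\<lambda>h. \<Sum>k<K. gf k z \<bullet> h)) (at z)"
    by (rule has_derivative_sum) (use f_grad in auto)
  then have "((\<lambda>x. (1 / real K) * (\<Sum>k<K. f k x)) has_derivative (\<lambda>h. (1 / real K) * (\<Sum>k<K. gf k z \<bullet> h))) (at z)"
    by (rule has_derivative_mult_right)
  moreover have "(\<lambda>h. (1 / real K) * (\<Sum>k<K. gf k z \<bullet> h)) = (\<lambda>h. gb z \<bullet> h)"
    by (simp add: gb_def inner_sum_left)
  ultimately show ?thesis by (simp add: Fb_def[abs_def])
qed

lemma Fb_descent: "Fb y \<le> Fb x + gb x \<bullet> (y - x) + L / 2 * (norm (y - x))\<^sup>2"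
  by (rule descent[OF Fb_deriv gb_lip])

lemma gb_h_bound: "(norm (gb (avg x) - avg (\<lambda>k. gf k (x k))))\<^sup>2 \<le> L\<^sup>2 * dr x"
proof -
  have "gb (avg x) - avg (\<lambda>k. gf k (x k)) = (1 / real K) *\<^sub>R (\<Sum>k<K. gf k (avg x) - gf k (x k))"
    by (simp add: gb_def avg_def sum_subtractf scaleR_diff_right)
  then have "(norm (gb (avg x) - avg (\<lambda>k. gf k (x k))))\<^sup>2 \<le> (1 / real K) * (\<Sum>k<K. (norm (gf k (avg x) - gf k (x k)))\<^sup>2)"
    using jensen_sq[OF K, of "\<lambda>k. gf k (avg x) - gf k (x k)"] by simp
  also have "\<dots> \<le> (1 / real K) * (\<Sum>k<K. L\<^sup>2 * (norm (x k - avg x))\<^sup>2)"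
  proof (intro mult_left_mono sum_mono)
    fix k assume "k \<in> {..<K}"
    then have "norm (gf k (avg x) - gf k (x k)) \<le> L * norm (avg x - x k)" by (intro gf_lip) auto
    then have "(norm (gf k (avg x) - gf k (x k)))\<^sup>2 \<le> (L * norm (avg x - x k))\<^sup>2"
      by (intro power_mono) auto
    then show "(norm (gf k (avg x) - gf k (x k)))\<^sup>2 \<le> L\<^sup>2 * (norm (x k - avg x))\<^sup>2"
      by (simp add: power_mult_distrib norm_minus_commute)
  qed (use Kpos in auto)
  also have "\<dots> = L\<^sup>2 * dr x"
    by (simp add: dr_def sum_distrib_left)
  finally show ?thesis .
qed

end


context noise_prod begin

lemma lin_int: "J \<subseteq> B \<Longrightarrow> integrable PB (\<lambda>y. w \<bullet> (\<Sum>i\<in>J. e i y))"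
  by (intro integrable_inner_right Bochner_Integration.integrable_sum e_int) auto

lemma lin_zero: "J \<subseteq> B \<Longrightarrow> (\<integral>y. w \<bullet> (\<Sum>i\<in>J. e i y) \<partial>PB) = 0"
proof -
  assume J: "J \<subseteq> B"
  have "(\<integral>y. w \<bullet> (\<Sum>i\<in>J. e i y) \<partial>PB) = w \<bullet> (\<integral>y. (\<Sum>i\<in>J. e i y) \<partial>PB)"
    using J by (intro integral_inner_right Bochner_Integration.integrable_sum e_int) auto
  also have "(\<integral>y. (\<Sum>i\<in>J. e i y) \<partial>PB) = (\<Sum>i\<in>J. integral\<^sup>L PB (e i))"
    using J by (intro Bochner_Integration.integral_sum e_int) auto
  also have "\<dots> = 0" using J by (intro sum.neutral) (auto simp: e_integral)
  finally show ?thesis by simp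
qed

lemma quad:
  assumes J: "J \<subseteq> B" and c2: "c2 \<ge> 0"
  shows "integrable PB (\<lambda>y. C0 + w \<bullet> (a *\<^sub>R (\<Sum>i\<in>J. e i y)) + c2 * (norm (a *\<^sub>R (\<Sum>i\<in>J. e i y)))\<^sup>2)"
    and "(\<integral>y. C0 + w \<bullet> (a *\<^sub>R (\<Sum>i\<in>J. e i y)) + c2 * (norm (a *\<^sub>R (\<Sum>i\<in>J. e i y)))\<^sup>2 \<partial>PB)
           \<le> C0 + c2 * a\<^sup>2 * real (card J) * s2"
proof -
  have eq: "C0 + w \<bullet> (a *\<^sub>R (\<Sum>i\<in>J. e i y)) + c2 * (norm (a *\<^sub>R (\<Sum>i\<in>J. e i y)))\<^sup>2
      = C0 + a * (w \<bullet> (\<Sum>i\<in>J. e i y)) + (c2 * a\<^sup>2) * (norm (\<Sum>i\<in>J. e i y))\<^sup>2" for y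
    by (simp add: power_mult_distrib)
  have i1: "integrable PB (\<lambda>y. w \<bullet> (\<Sum>i\<in>J. e i y))" by (rule lin_int[OF J])
  have i2: "integrable PB (\<lambda>y. (norm (\<Sum>i\<in>J. e i y))\<^sup>2)" by (rule sum_sq_int[OF J])
  have ic: "integrable PB (\<lambda>y. C0)"
    using prob_space.finite_measure[OF PB_prob] finite_measure.integrable_const by blast
  have int: "integrable PB (\<lambda>y. C0 + a * (w \<bullet> (\<Sum>i\<in>J. e i y)) + (c2 * a\<^sup>2) * (norm (\<Sum>i\<in>J. e i y))\<^sup>2)"
    using ic i1 i2 by auto
  then show "integrable PB (\<lambda>y. C0 + w \<bullet> (a *\<^sub>R (\<Sum>i\<in>J. e i y)) + c2 * (norm (a *\<^sub>R (\<Sum>i\<in>J. e i y)))\<^sup>2)"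
    unfolding eq .
  have "(\<integral>y. C0 + w \<bullet> (a *\<^sub>R (\<Sum>i\<in>J. e i y)) + c2 * (norm (a *\<^sub>R (\<Sum>i\<in>J. e i y)))\<^sup>2 \<partial>PB)
      = (\<integral>y. C0 + a * (w \<bullet> (\<Sum>i\<in>J. e i y)) + (c2 * a\<^sup>2) * (norm (\<Sum>i\<in>J. e i y))\<^sup>2 \<partial>PB)"
    unfolding eq ..
  also have "\<dots> = (\<integral>y. C0 \<partial>PB) + a * (\<integral>y. w \<bullet> (\<Sum>i\<in>J. e i y) \<partial>PB) + (c2 * a\<^sup>2) * (\<integral>y. (norm (\<Sum>i\<in>J. e i y))\<^sup>2 \<partial>PB)"
    using ic i1 i2 by (simp add: Bochner_Integration.integral_add)
  also have "(\<integral>y. C0 \<partial>PB) = C0"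
    using prob_space.prob_space[OF PB_prob] by simp
  also have "(\<integral>y. w \<bullet> (\<Sum>i\<in>J. e i y) \<partial>PB) = 0" by (rule lin_zero[OF J])
  also have "(c2 * a\<^sup>2) * (\<integral>y. (norm (\<Sum>i\<in>J. e i y))\<^sup>2 \<partial>PB) \<le> (c2 * a\<^sup>2) * (real (card J) * s2)"
    using c2 by (intro mult_left_mono sum_sq_le[OF J]) auto
  finally show "(\<integral>y. C0 + w \<bullet> (a *\<^sub>R (\<Sum>i\<in>J. e i y)) + c2 * (norm (a *\<^sub>R (\<Sum>i\<in>J. e i y)))\<^sup>2 \<partial>PB)
           \<le> C0 + c2 * a\<^sup>2 * real (card J) * s2" by (simp add: mult.assoc)
qed

end


context fed begin

definition En :: "(nat \<Rightarrow> 'a) \<Rightarrow> nat \<times> nat \<times> nat \<Rightarrow> 'b \<Rightarrow> 'a" where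
  "En x i s = G (fst (snd i)) (x (fst (snd i))) s - gf (fst (snd i)) (x (fst (snd i)))"

lemma np: "noise_prod Dm (Bk t) (En x) (\<sigma>\<^sup>2)"
proof (rule noise_prod.intro)
  show "prob_space (Dm l)" for l by (rule Dm_prob)
  show "finite (Bk t)" by (simp add: Bk_def)
  show "0 \<le> \<sigma>\<^sup>2" by simp
  fix i assume i: "i \<in> Bk t"
  then obtain k j where ikj: "i = (t, k, j)" and k: "k < K" by (auto simp: Bk_def)
  have Dmi: "Dm (t, k, j) = D k" using k by (simp add: Dm_def)
  interpret P: prob_space "D k" by (rule D_prob[OF k])
  have m: "G k (x k) \<in> borel_measurable (D k)" by (rule G_meas1[OF k])
  show "En x i \<in> borel_measurable (Dm i)"
    unfolding ikj Dmi En_def using m by simp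
  show "integrable (Dm i) (En x i)"
    unfolding ikj Dmi En_def using A2_int[OF k] by simp
  show "integral\<^sup>L (Dm i) (En x i) = 0"
    unfolding ikj Dmi En_def using A2_int[OF k] A2_unb[OF k]
    by (simp add: Bochner_Integration.integral_diff P.prob_space)
  show "(\<integral>\<^sup>+ s. ennreal ((norm (En x i s))\<^sup>2) \<partial>Dm i) \<le> ennreal (\<sigma>\<^sup>2)"
    unfolding ikj Dmi En_def using A2_var[OF k] by simp
qed

lemma sum_J1: "(\<Sum>i\<in>{t} \<times> {k} \<times> {..<b}. \<phi> i) = (\<Sum>j<b. \<phi> (t, k, j))"
proof -
  have "{t} \<times> {k} \<times> {..<b} = (\<lambda>j. (t, k, j)) ` {..<b}" by auto
  moreover have "inj_on (\<lambda>j. (t, k, j)) {..<b}" by (auto simp: inj_on_def)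
  ultimately show ?thesis by (simp add: sum.reindex)
qed

lemma sum_Bk: "(\<Sum>i\<in>Bk t. \<phi> i) = (\<Sum>k<K. \<Sum>j<b. \<phi> (t, k, j))"
proof -
  have "Bk t = (\<lambda>(k, j). (t, k, j)) ` ({..<K} \<times> {..<b})" by (auto simp: Bk_def)
  moreover have "inj_on (\<lambda>(k, j). (t, k, j)) ({..<K} \<times> {..<b})" by (auto simp: inj_on_def)
  ultimately have "(\<Sum>i\<in>Bk t. \<phi> i) = (\<Sum>p\<in>{..<K} \<times> {..<b}. \<phi> (t, fst p, snd p))"
    by (simp add: sum.reindex case_prod_beta)
  also have "\<dots> = (\<Sum>(k, j)\<in>{..<K} \<times> {..<b}. \<phi> (t, k, j))"
    by (simp add: case_prod_beta)
  also have "\<dots> = (\<Sum>k<K. \<Sum>j<b. \<phi> (t, k, j))"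
    by (rule sum.cartesian_product[symmetric])
  finally show ?thesis .
qed

lemma card_J1: "card ({t} \<times> {k} \<times> {..<b}) = b" by (simp add: card_cartesian_product)
lemma card_Bk: "card (Bk t) = K * b" by (simp add: Bk_def card_cartesian_product)
lemma J1_sub: "k < K \<Longrightarrow> {t} \<times> {k} \<times> {..<b} \<subseteq> Bk t" by (auto simp: Bk_def)

lemma avg_const: "avg (\<lambda>k. c) = c"
  using Kpos by (simp add: avg_def sum_constant_scaleR)

lemma avg_lin: "avg (\<lambda>k. u k - \<eta> *\<^sub>R (v k + w k)) = avg u - \<eta> *\<^sub>R (avg v + avg w)"
  by (simp add: avg_def sum_subtractf sum.distrib scaleR_sum_right[symmetric] scaleR_diff_right scaleR_add_right)

abbreviation nk :: "(nat \<Rightarrow> 'a) \<Rightarrow> nat \<Rightarrow> (nat \<times> nat \<times> nat \<Rightarrow> 'b) \<Rightarrow> nat \<Rightarrow> 'a" where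
  "nk x t y k \<equiv> (1 / real b) *\<^sub>R (\<Sum>i\<in>{t} \<times> {k} \<times> {..<b}. En x i (y i))"

abbreviation Nb :: "(nat \<Rightarrow> 'a) \<Rightarrow> nat \<Rightarrow> (nat \<times> nat \<times> nat \<Rightarrow> 'b) \<Rightarrow> 'a" where
  "Nb x t y \<equiv> (1 / (real K * real b)) *\<^sub>R (\<Sum>i\<in>Bk t. En x i (y i))"

definition zz :: "(nat \<Rightarrow> 'a) \<Rightarrow> (nat \<Rightarrow> nat \<Rightarrow> 'b) \<Rightarrow> nat \<Rightarrow> 'a" where
  "zz x y k = x k - \<eta> *\<^sub>R ((1 / real b) *\<^sub>R (\<Sum>j<b. G k (x k) (y k j)))"

lemma step_zz: "step t x y = (if t mod I = 0 then (\<lambda>k. avg (zz x y)) else zz x y)"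
  by (simp add: step_def zz_def avg_def Let_def fun_eq_iff)

lemma zz_eq: "zz x (\<lambda>k j. y (t, k, j)) k = x k - \<eta> *\<^sub>R (gf k (x k) + nk x t y k)"
proof -
  have "(\<Sum>j<b. G k (x k) (y (t, k, j))) = (\<Sum>j<b. En x (t, k, j) (y (t, k, j))) + real b *\<^sub>R gf k (x k)"
    by (simp add: En_def sum_subtractf sum_constant_scaleR)
  then have "(1 / real b) *\<^sub>R (\<Sum>j<b. G k (x k) (y (t, k, j))) = gf k (x k) + (1 / real b) *\<^sub>R (\<Sum>j<b. En x (t, k, j) (y (t, k, j)))"
    using b by (simp add: scaleR_add_right add.commute)
  then show ?thesis by (simp add: zz_def sum_J1)
qed

lemma avg_nk: "avg (nk x t y) = Nb x t y"
  by (simp add: avg_def sum_J1 sum_Bk scaleR_sum_right[symmetric])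

lemma avg_zz: "avg (zz x (\<lambda>k j. y (t, k, j))) = avg x - \<eta> *\<^sub>R (avg (\<lambda>k. gf k (x k)) + Nb x t y)"
  unfolding zz_eq avg_lin avg_nk ..

lemma avg_step: "avg (step t x (\<lambda>k j. y (t, k, j))) = avg x - \<eta> *\<^sub>R (avg (\<lambda>k. gf k (x k)) + Nb x t y)"
  by (simp add: step_zz avg_const avg_zz)

end


lemma young: fixes u v :: "'a::real_inner" assumes a: "\<alpha> > 0"
  shows "(norm (u - v))\<^sup>2 \<le> (1 + \<alpha>) * (norm u)\<^sup>2 + (1 + 1/\<alpha>) * (norm v)\<^sup>2"
proof -
  have "0 \<le> (norm (\<alpha> *\<^sub>R u + v))\<^sup>2" by simp
  also have "\<dots> = \<alpha>\<^sup>2 * (norm u)\<^sup>2 + 2 * \<alpha> * (u \<bullet> v) + (norm v)\<^sup>2"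
    by (simp add: norm_add_sq power_mult_distrib)
  finally have f: "\<alpha> * (- 2 * (u \<bullet> v)) \<le> \<alpha>\<^sup>2 * (norm u)\<^sup>2 + (norm v)\<^sup>2" by simp
  have r: "\<alpha> * (\<alpha> * (norm u)\<^sup>2 + (norm v)\<^sup>2 / \<alpha>) = \<alpha>\<^sup>2 * (norm u)\<^sup>2 + (norm v)\<^sup>2"
    using a by (simp add: field_simps power2_eq_square)
  have "- 2 * (u \<bullet> v) \<le> \<alpha> * (norm u)\<^sup>2 + (norm v)\<^sup>2 / \<alpha>"
    using f r a by (metis mult_le_cancel_left_pos)
  then show ?thesis by (simp add: norm_diff_sq algebra_simps)
qed

context fed begin

lemma etaL1: "\<eta> * L \<le> 1"
proof -
  have "\<eta> * L * 1 \<le> \<eta> * L * real I" using I eta L by (intro mult_left_mono) auto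
  also have "\<dots> \<le> 1/9" by (rule etaLI)
  finally show ?thesis by simp
qed

lemma desc_step:
  assumes fs: "\<And>z. fs \<le> Fb z"
  shows "(\<integral>\<^sup>+y. ennreal (Fb (avg (step t x (\<lambda>k j. y (t, k, j)))) - fs) \<partial>PiM (Bk t) Dm)
          + ennreal (\<eta> / 2 * (norm (gb (avg x)))\<^sup>2)
        \<le> ennreal (Fb (avg x) - fs + \<eta> * L\<^sup>2 / 2 * dr x + L * \<eta>\<^sup>2 * \<sigma>\<^sup>2 / (2 * real b * real K))"
proof -
  interpret N: noise_prod Dm "Bk t" "En x" "\<sigma>\<^sup>2" by (rule np)
  define xb where "xb = avg x"
  define g where "g = gb xb"
  define h where "h = avg (\<lambda>k. gf k (x k))"
  define a where "a = 1 / (real K * real b)"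
  define C0 where "C0 = Fb xb - fs - \<eta> * (g \<bullet> h) + L * \<eta>\<^sup>2 / 2 * (norm h)\<^sup>2"
  define w where "w = (L * \<eta>\<^sup>2) *\<^sub>R h - \<eta> *\<^sub>R g"
  define c2 where "c2 = L * \<eta>\<^sup>2 / 2"
  define R where "R y = C0 + w \<bullet> (a *\<^sub>R (\<Sum>i\<in>Bk t. N.e i y)) + c2 * (norm (a *\<^sub>R (\<Sum>i\<in>Bk t. N.e i y)))\<^sup>2" for y
  have c2: "c2 \<ge> 0" using L by (simp add: c2_def)
  have Rint: "integrable (PiM (Bk t) Dm) R"
    unfolding R_def by (rule N.quad(1)[OF subset_refl c2])
  have Rle: "integral\<^sup>L (PiM (Bk t) Dm) R \<le> C0 + c2 * a\<^sup>2 * real (card (Bk t)) * \<sigma>\<^sup>2"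
    unfolding R_def by (rule N.quad(2)[OF subset_refl c2])
  have pw: "Fb (avg (step t x (\<lambda>k j. y (t, k, j)))) - fs \<le> R y" for y
  proof -
    define Nv where "Nv = a *\<^sub>R (\<Sum>i\<in>Bk t. N.e i y)"
    have st: "avg (step t x (\<lambda>k j. y (t, k, j))) = xb - \<eta> *\<^sub>R (h + Nv)"
      unfolding avg_step xb_def h_def Nv_def a_def by simp
    have "Fb (xb - \<eta> *\<^sub>R (h + Nv)) \<le> Fb xb + g \<bullet> ((xb - \<eta> *\<^sub>R (h + Nv)) - xb) + L / 2 * (norm ((xb - \<eta> *\<^sub>R (h + Nv)) - xb))\<^sup>2"
      unfolding g_def by (rule Fb_descent)
    also have "\<dots> = Fb xb - \<eta> * (g \<bullet> h) - \<eta> * (g \<bullet> Nv) + L * \<eta>\<^sup>2 / 2 * ((norm h)\<^sup>2 + 2 * (h \<bullet> Nv) + (norm Nv)\<^sup>2)"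
    proof -
      have d: "(xb - \<eta> *\<^sub>R (h + Nv)) - xb = - (\<eta> *\<^sub>R (h + Nv))" by simp
      have n2: "(norm (- (\<eta> *\<^sub>R (h + Nv))))\<^sup>2 = \<eta>\<^sup>2 * (norm (h + Nv))\<^sup>2"
        by (simp add: power_mult_distrib)
      have i2: "g \<bullet> (- (\<eta> *\<^sub>R (h + Nv))) = - \<eta> * (g \<bullet> h) - \<eta> * (g \<bullet> Nv)"
        by (simp add: inner_add_right algebra_simps)
      show ?thesis unfolding d n2 i2 norm_add_sq by (simp add: algebra_simps)
    qed
    also have "\<dots> = R y + fs"
      by (simp add: R_def C0_def w_def c2_def Nv_def[symmetric] inner_diff_left algebra_simps)
    finally show ?thesis using st by simp
  qed
  have Rnn: "0 \<le> R y" for y using pw[of y] fs[of "avg (step t x (\<lambda>k j. y (t, k, j)))"] by linarith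
  have "(\<integral>\<^sup>+y. ennreal (Fb (avg (step t x (\<lambda>k j. y (t, k, j)))) - fs) \<partial>PiM (Bk t) Dm)
        \<le> (\<integral>\<^sup>+y. ennreal (R y) \<partial>PiM (Bk t) Dm)"
    by (intro nn_integral_mono ennreal_leI pw)
  also have "\<dots> = ennreal (integral\<^sup>L (PiM (Bk t) Dm) R)"
    by (rule nn_integral_eq_integral[OF Rint]) (simp add: Rnn)
  finally have A: "(\<integral>\<^sup>+y. ennreal (Fb (avg (step t x (\<lambda>k j. y (t, k, j)))) - fs) \<partial>PiM (Bk t) Dm)
        \<le> ennreal (C0 + c2 * a\<^sup>2 * real (card (Bk t)) * \<sigma>\<^sup>2)"
    using Rle by (meson ennreal_leI order_trans)
  have noise_term: "c2 * a\<^sup>2 * real (card (Bk t)) * \<sigma>\<^sup>2 = L * \<eta>\<^sup>2 * \<sigma>\<^sup>2 / (2 * real b * real K)"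
    using K b by (simp add: c2_def a_def card_Bk power2_eq_square field_simps)
  have gh: "(norm (g - h))\<^sup>2 \<le> L\<^sup>2 * dr x"
    unfolding g_def h_def xb_def by (rule gb_h_bound)
  have C0b: "C0 + \<eta> / 2 * (norm g)\<^sup>2 \<le> Fb xb - fs + \<eta> * L\<^sup>2 / 2 * dr x"
  proof -
    have e1: "- \<eta> * (g \<bullet> h) = \<eta> / 2 * ((norm (g - h))\<^sup>2 - (norm g)\<^sup>2 - (norm h)\<^sup>2)"
      by (simp add: norm_diff_sq algebra_simps)
    have e2: "L * \<eta>\<^sup>2 / 2 * (norm h)\<^sup>2 \<le> \<eta> / 2 * (norm h)\<^sup>2"
    proof -
      have "L * \<eta>\<^sup>2 = \<eta> * (\<eta> * L)" by (simp add: power2_eq_square)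
      also have "\<dots> \<le> \<eta> * 1" using etaL1 eta by (intro mult_left_mono) auto
      finally show ?thesis by (intro mult_right_mono divide_right_mono) auto
    qed
    have e3: "\<eta> / 2 * (norm (g - h))\<^sup>2 \<le> \<eta> / 2 * (L\<^sup>2 * dr x)"
      using gh eta by (intro mult_left_mono) auto
    show ?thesis unfolding C0_def using e1 e2 e3 by (simp add: algebra_simps)
  qed
  have "(\<integral>\<^sup>+y. ennreal (Fb (avg (step t x (\<lambda>k j. y (t, k, j)))) - fs) \<partial>PiM (Bk t) Dm)
          + ennreal (\<eta> / 2 * (norm (gb (avg x)))\<^sup>2)
       \<le> ennreal (C0 + c2 * a\<^sup>2 * real (card (Bk t)) * \<sigma>\<^sup>2) + ennreal (\<eta> / 2 * (norm g)\<^sup>2)"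
    using A by (simp add: g_def xb_def add_right_mono)
  also have "\<dots> = ennreal (C0 + c2 * a\<^sup>2 * real (card (Bk t)) * \<sigma>\<^sup>2 + \<eta> / 2 * (norm g)\<^sup>2)"
  proof (rule ennreal_plus[symmetric])
    show "0 \<le> \<eta> / 2 * (norm g)\<^sup>2" using eta by simp
    show "0 \<le> C0 + c2 * a\<^sup>2 * real (card (Bk t)) * \<sigma>\<^sup>2"
    proof -
      have "0 \<le> integral\<^sup>L (PiM (Bk t) Dm) R" by (rule integral_nonneg_AE) (simp add: Rnn)
      then show ?thesis using Rle by linarith
    qed
  qed
  also have "\<dots> \<le> ennreal (Fb (avg x) - fs + \<eta> * L\<^sup>2 / 2 * dr x + L * \<eta>\<^sup>2 * \<sigma>\<^sup>2 / (2 * real b * real K))"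
    using C0b noise_term by (intro ennreal_leI) (simp add: xb_def)
  finally show ?thesis .
qed

end


lemma ring3: "(c::real) * (a1 * SA + a2 * SB) = a1 * (c * SA) + a2 * (c * SB)" by (simp add: algebra_simps)

context fed begin

lemma het_m: "k < K \<Longrightarrow> (norm (gf k z - gb z))\<^sup>2 \<le> \<zeta>\<^sup>2"
proof -
  assume k: "k < K"
  have "gf k z - gb z = (1 / real K) *\<^sub>R (\<Sum>l<K. gf k z - gf l z)"
    using Kpos by (simp add: gb_def sum_subtractf sum_constant_scaleR scaleR_diff_right)
  then have "(norm (gf k z - gb z))\<^sup>2 \<le> (1 / real K) * (\<Sum>l<K. (norm (gf k z - gf l z))\<^sup>2)"
    using jensen_sq[OF K, of "\<lambda>l. gf k z - gf l z"] by simp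
  also have "\<dots> \<le> (1 / real K) * (\<Sum>l<K. \<zeta>\<^sup>2)"
    using k by (intro mult_left_mono sum_mono A2_het) auto
  also have "\<dots> = \<zeta>\<^sup>2" using Kpos by simp
  finally show ?thesis .
qed

lemma hetero: "(1 / real K) * (\<Sum>k<K. (norm (gf k (x k) - avg (\<lambda>k. gf k (x k))))\<^sup>2) \<le> 2 * L\<^sup>2 * dr x + 2 * \<zeta>\<^sup>2"
proof -
  define xb where "xb = avg x"
  define m where "m = gb xb"
  have "(\<Sum>k<K. (norm (gf k (x k) - avg (\<lambda>k. gf k (x k))))\<^sup>2) \<le> (\<Sum>k<K. (norm (gf k (x k) - m))\<^sup>2)"
    unfolding avg_def by (rule var_le[OF K])
  also have "\<dots> \<le> (\<Sum>k<K. 2 * (L\<^sup>2 * (norm (x k - xb))\<^sup>2) + 2 * \<zeta>\<^sup>2)"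
  proof (rule sum_mono)
    fix k assume "k \<in> {..<K}"
    then have k: "k < K" by simp
    have "(norm (gf k (x k) - m))\<^sup>2 = (norm ((gf k (x k) - gf k xb) - (m - gf k xb)))\<^sup>2" by simp
    also have "\<dots> \<le> (1 + 1) * (norm (gf k (x k) - gf k xb))\<^sup>2 + (1 + 1/1) * (norm (m - gf k xb))\<^sup>2"
      by (rule young) simp
    also have "(norm (gf k (x k) - gf k xb))\<^sup>2 \<le> L\<^sup>2 * (norm (x k - xb))\<^sup>2"
    proof -
      have "norm (gf k (x k) - gf k xb) \<le> L * norm (x k - xb)" by (rule gf_lip[OF k])
      then have "(norm (gf k (x k) - gf k xb))\<^sup>2 \<le> (L * norm (x k - xb))\<^sup>2" by (intro power_mono) auto
      then show ?thesis by (simp add: power_mult_distrib)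
    qed
    also have "(norm (m - gf k xb))\<^sup>2 \<le> \<zeta>\<^sup>2"
      using het_m[OF k, of xb] by (simp add: m_def norm_minus_commute)
    finally show "(norm (gf k (x k) - m))\<^sup>2 \<le> 2 * (L\<^sup>2 * (norm (x k - xb))\<^sup>2) + 2 * \<zeta>\<^sup>2" by simp
  qed
  also have "\<dots> = 2 * L\<^sup>2 * (\<Sum>k<K. (norm (x k - xb))\<^sup>2) + real K * (2 * \<zeta>\<^sup>2)"
    by (simp add: sum.distrib sum_distrib_left mult.assoc)
  finally have "(\<Sum>k<K. (norm (gf k (x k) - avg (\<lambda>k. gf k (x k))))\<^sup>2) \<le> 2 * L\<^sup>2 * (\<Sum>k<K. (norm (x k - xb))\<^sup>2) + real K * (2 * \<zeta>\<^sup>2)" .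
  then have "(1 / real K) * (\<Sum>k<K. (norm (gf k (x k) - avg (\<lambda>k. gf k (x k))))\<^sup>2)
       \<le> (1 / real K) * (2 * L\<^sup>2 * (\<Sum>k<K. (norm (x k - xb))\<^sup>2) + real K * (2 * \<zeta>\<^sup>2))"
    using Kpos by (intro mult_left_mono) auto
  also have "\<dots> = 2 * L\<^sup>2 * dr x + 2 * \<zeta>\<^sup>2"
    using Kpos by (simp add: dr_def xb_def field_simps)
  finally show ?thesis .
qed

lemma dr_nonneg: "0 \<le> dr x"
  unfolding dr_def using Kpos by (intro mult_nonneg_nonneg sum_nonneg) auto

lemma drift_step:
  assumes tI: "t mod I \<noteq> 0" and al: "\<alpha> > 0"
  shows "(\<integral>\<^sup>+y. ennreal (dr (step t x (\<lambda>k j. y (t, k, j)))) \<partial>PiM (Bk t) Dm)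
     \<le> ennreal ((1 + \<alpha> + 2 * (1 + 1/\<alpha>) * \<eta>\<^sup>2 * L\<^sup>2) * dr x + 2 * (1 + 1/\<alpha>) * \<eta>\<^sup>2 * \<zeta>\<^sup>2 + \<eta>\<^sup>2 * \<sigma>\<^sup>2 / real b)"
proof -
  interpret N: noise_prod Dm "Bk t" "En x" "\<sigma>\<^sup>2" by (rule np)
  define xb where "xb = avg x"
  define hb where "hb = avg (\<lambda>k. gf k (x k))"
  define ak where "ak k = (x k - xb) - \<eta> *\<^sub>R (gf k (x k) - hb)" for k
  define J where "J k = {t} \<times> {k} \<times> {..<b}" for k :: nat
  define Rk where "Rk k y = (norm (ak k))\<^sup>2 + (- (2 * \<eta>) *\<^sub>R ak k) \<bullet> ((1 / real b) *\<^sub>R (\<Sum>i\<in>J k. N.e i y))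
      + \<eta>\<^sup>2 * (norm ((1 / real b) *\<^sub>R (\<Sum>i\<in>J k. N.e i y)))\<^sup>2" for k y
  define R where "R y = (1 / real K) * (\<Sum>k<K. Rk k y)" for y
  have Jsub: "k < K \<Longrightarrow> J k \<subseteq> Bk t" for k unfolding J_def by (rule J1_sub)
  have e2: "\<eta>\<^sup>2 \<ge> 0" by simp
  have Rkint: "k < K \<Longrightarrow> integrable (PiM (Bk t) Dm) (Rk k)" for k
    unfolding Rk_def[abs_def] by (rule N.quad(1)[OF Jsub e2])
  have Rkle: "k < K \<Longrightarrow> integral\<^sup>L (PiM (Bk t) Dm) (Rk k) \<le> (norm (ak k))\<^sup>2 + \<eta>\<^sup>2 * (1 / real b)\<^sup>2 * real b * \<sigma>\<^sup>2" for k
    unfolding Rk_def[abs_def] using N.quad(2)[OF Jsub e2, of k "(norm (ak k))\<^sup>2" "- (2 * \<eta>) *\<^sub>R ak k" "1 / real b"]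
    by (simp add: J_def card_J1)
  have Rint: "integrable (PiM (Bk t) Dm) R"
    unfolding R_def[abs_def]
    by (intro integrable_mult_right Bochner_Integration.integrable_sum) (use Rkint in auto)
  have "integral\<^sup>L (PiM (Bk t) Dm) R = (1 / real K) * (\<Sum>k<K. integral\<^sup>L (PiM (Bk t) Dm) (Rk k))"
    unfolding R_def[abs_def] using Rkint by (simp add: Bochner_Integration.integral_sum)
  also have "\<dots> \<le> (1 / real K) * (\<Sum>k<K. (norm (ak k))\<^sup>2 + \<eta>\<^sup>2 * (1 / real b)\<^sup>2 * real b * \<sigma>\<^sup>2)"
    using Kpos Rkle by (intro mult_left_mono sum_mono) auto
  also have "\<dots> = (1 / real K) * (\<Sum>k<K. (norm (ak k))\<^sup>2) + (1 / real K) * (real K * (\<eta>\<^sup>2 * \<sigma>\<^sup>2 / real b))"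
  proof -
    have c: "\<eta>\<^sup>2 * (1 / real b)\<^sup>2 * real b * \<sigma>\<^sup>2 = \<eta>\<^sup>2 * \<sigma>\<^sup>2 / real b"
      using b by (simp add: power2_eq_square field_simps)
    show ?thesis unfolding c by (simp add: sum.distrib distrib_left)
  qed
  also have "\<dots> = (1 / real K) * (\<Sum>k<K. (norm (ak k))\<^sup>2) + \<eta>\<^sup>2 * \<sigma>\<^sup>2 / real b"
    using Kpos by simp
  finally have Rle: "integral\<^sup>L (PiM (Bk t) Dm) R \<le> (1 / real K) * (\<Sum>k<K. (norm (ak k))\<^sup>2) + \<eta>\<^sup>2 * \<sigma>\<^sup>2 / real b" .
  have pw: "dr (step t x (\<lambda>k j. y (t, k, j))) \<le> R y" for y
  proof -
    define z where "z = zz x (\<lambda>k j. y (t, k, j))"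
    have st: "step t x (\<lambda>k j. y (t, k, j)) = z" using tI by (simp add: step_zz z_def)
    have zk: "z k - (xb - \<eta> *\<^sub>R hb) = ak k - \<eta> *\<^sub>R ((1 / real b) *\<^sub>R (\<Sum>i\<in>J k. N.e i y))" for k
      by (simp add: z_def zz_eq ak_def J_def algebra_simps)
    have "dr z = (1 / real K) * (\<Sum>k<K. (norm (z k - avg z))\<^sup>2)" by (simp add: dr_def)
    also have "\<dots> \<le> (1 / real K) * (\<Sum>k<K. (norm (z k - (xb - \<eta> *\<^sub>R hb)))\<^sup>2)"
      using Kpos by (intro mult_left_mono) (auto simp: avg_def intro: var_le[OF K])
    also have "\<dots> = R y"
      unfolding R_def Rk_def zk
      by (simp add: norm_diff_sq inner_scaleR_right power_mult_distrib power_divide algebra_simps)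
    finally show ?thesis using st by simp
  qed
  have Rnn: "0 \<le> R y" for y using pw[of y] dr_nonneg[of "step t x (\<lambda>k j. y (t, k, j))"] by linarith
  have "(\<integral>\<^sup>+y. ennreal (dr (step t x (\<lambda>k j. y (t, k, j)))) \<partial>PiM (Bk t) Dm)
        \<le> (\<integral>\<^sup>+y. ennreal (R y) \<partial>PiM (Bk t) Dm)"
    by (intro nn_integral_mono ennreal_leI pw)
  also have "\<dots> = ennreal (integral\<^sup>L (PiM (Bk t) Dm) R)"
    by (rule nn_integral_eq_integral[OF Rint]) (simp add: Rnn)
  also have "\<dots> \<le> ennreal ((1 / real K) * (\<Sum>k<K. (norm (ak k))\<^sup>2) + \<eta>\<^sup>2 * \<sigma>\<^sup>2 / real b)"
    using Rle by (rule ennreal_leI)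
  also have "\<dots> \<le> ennreal ((1 + \<alpha> + 2 * (1 + 1/\<alpha>) * \<eta>\<^sup>2 * L\<^sup>2) * dr x + 2 * (1 + 1/\<alpha>) * \<eta>\<^sup>2 * \<zeta>\<^sup>2 + \<eta>\<^sup>2 * \<sigma>\<^sup>2 / real b)"
  proof (rule ennreal_leI)
    have "(1 / real K) * (\<Sum>k<K. (norm (ak k))\<^sup>2)
        \<le> (1 / real K) * (\<Sum>k<K. (1 + \<alpha>) * (norm (x k - xb))\<^sup>2 + (1 + 1/\<alpha>) * (\<eta>\<^sup>2 * (norm (gf k (x k) - hb))\<^sup>2))"
      using Kpos by (intro mult_left_mono sum_mono)
        (auto simp: ak_def power_mult_distrib intro!: order_trans[OF young[OF al]])
    also have "\<dots> = (1 + \<alpha>) * dr x + (1 + 1/\<alpha>) * \<eta>\<^sup>2 * ((1 / real K) * (\<Sum>k<K. (norm (gf k (x k) - hb))\<^sup>2))"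
    proof -
      have "(\<Sum>k<K. (1 + \<alpha>) * (norm (x k - xb))\<^sup>2 + (1 + 1/\<alpha>) * (\<eta>\<^sup>2 * (norm (gf k (x k) - hb))\<^sup>2))
          = (1 + \<alpha>) * (\<Sum>k<K. (norm (x k - xb))\<^sup>2) + ((1 + 1/\<alpha>) * \<eta>\<^sup>2) * (\<Sum>k<K. (norm (gf k (x k) - hb))\<^sup>2)"
        by (simp add: sum.distrib sum_distrib_left mult.assoc)
      then have "(1 / real K) * (\<Sum>k<K. (1 + \<alpha>) * (norm (x k - xb))\<^sup>2 + (1 + 1/\<alpha>) * (\<eta>\<^sup>2 * (norm (gf k (x k) - hb))\<^sup>2))
          = (1 / real K) * ((1 + \<alpha>) * (\<Sum>k<K. (norm (x k - xb))\<^sup>2) + ((1 + 1/\<alpha>) * \<eta>\<^sup>2) * (\<Sum>k<K. (norm (gf k (x k) - hb))\<^sup>2))"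
        by (rule arg_cong)
      also have "\<dots> = (1 + \<alpha>) * ((1 / real K) * (\<Sum>k<K. (norm (x k - xb))\<^sup>2)) + ((1 + 1/\<alpha>) * \<eta>\<^sup>2) * ((1 / real K) * (\<Sum>k<K. (norm (gf k (x k) - hb))\<^sup>2))"
        by (simp only: ring3)
      also have "(1 / real K) * (\<Sum>k<K. (norm (x k - xb))\<^sup>2) = dr x" by (simp add: dr_def xb_def)
      finally show ?thesis .
    qed
    also have "\<dots> \<le> (1 + \<alpha>) * dr x + (1 + 1/\<alpha>) * \<eta>\<^sup>2 * (2 * L\<^sup>2 * dr x + 2 * \<zeta>\<^sup>2)"
      using al hetero[of x] by (intro add_left_mono mult_left_mono) (auto simp: hb_def)
    also have "\<dots> = (1 + \<alpha> + 2 * (1 + 1/\<alpha>) * \<eta>\<^sup>2 * L\<^sup>2) * dr x + 2 * (1 + 1/\<alpha>) * \<eta>\<^sup>2 * \<zeta>\<^sup>2"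
      by (simp add: algebra_simps)
    finally show "(1 / real K) * (\<Sum>k<K. (norm (ak k))\<^sup>2) + \<eta>\<^sup>2 * \<sigma>\<^sup>2 / real b
        \<le> (1 + \<alpha> + 2 * (1 + 1/\<alpha>) * \<eta>\<^sup>2 * L\<^sup>2) * dr x + 2 * (1 + 1/\<alpha>) * \<eta>\<^sup>2 * \<zeta>\<^sup>2 + \<eta>\<^sup>2 * \<sigma>\<^sup>2 / real b"
      by simp
  qed
  finally show ?thesis .
qed

lemma drift_avg: "t mod I = 0 \<Longrightarrow> dr (step t x y) = 0"
  by (simp add: step_zz dr_def avg_const)

end


lemma transfer:
  fixes X :: "'i \<Rightarrow> 'm \<Rightarrow> 'b"
  assumes P: "prob_space M" and ind: "prob_space.indep_vars M (\<lambda>_. S) X J"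
    and AJ: "A \<subseteq> J" and BJ: "B \<subseteq> J" and AB: "A \<inter> B = {}"
    and h: "h \<in> borel_measurable (PiM A (\<lambda>_. S) \<Otimes>\<^sub>M PiM B (\<lambda>_. S))"
  shows "(\<integral>\<^sup>+\<omega>. h (restrict (\<lambda>i. X i \<omega>) A, restrict (\<lambda>i. X i \<omega>) B) \<partial>M)
       = (\<integral>\<^sup>+\<omega>. (\<integral>\<^sup>+y. h (restrict (\<lambda>i. X i \<omega>) A, y) \<partial>distr M (PiM B (\<lambda>_. S)) (\<lambda>\<omega>. restrict (\<lambda>i. X i \<omega>) B)) \<partial>M)"
proof -
  interpret prob_space M by fact
  let ?PA = "PiM A (\<lambda>_. S)" and ?PB = "PiM B (\<lambda>_. S)"
  let ?pa = "\<lambda>\<omega>. restrict (\<lambda>i. X i \<omega>) A" and ?pb = "\<lambda>\<omega>. restrict (\<lambda>i. X i \<omega>) B"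
  have iv: "indep_var ?PA ?pa ?PB ?pb"
    by (rule indep_var_restrict[OF ind AB AJ BJ])
  then have rv: "random_variable ?PA ?pa" "random_variable ?PB ?pb"
    and eq: "distr M ?PA ?pa \<Otimes>\<^sub>M distr M ?PB ?pb = distr M (?PA \<Otimes>\<^sub>M ?PB) (\<lambda>x. (?pa x, ?pb x))"
    using indep_var_distribution_eq by blast+
  interpret DA: prob_space "distr M ?PA ?pa" by (rule prob_space_distr[OF rv(1)])
  interpret DB: prob_space "distr M ?PB ?pb" by (rule prob_space_distr[OF rv(2)])
  have pm: "(\<lambda>x. (?pa x, ?pb x)) \<in> measurable M (?PA \<Otimes>\<^sub>M ?PB)" using rv by (rule measurable_Pair)
  have h': "h \<in> borel_measurable (distr M ?PA ?pa \<Otimes>\<^sub>M distr M ?PB ?pb)"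
    using h by (simp cong: measurable_cong_sets)
  have "(\<integral>\<^sup>+\<omega>. h (?pa \<omega>, ?pb \<omega>) \<partial>M) = integral\<^sup>N (distr M (?PA \<Otimes>\<^sub>M ?PB) (\<lambda>x. (?pa x, ?pb x))) h"
    by (subst nn_integral_distr[OF pm]) (simp_all add: h)
  also have "\<dots> = integral\<^sup>N (distr M ?PA ?pa \<Otimes>\<^sub>M distr M ?PB ?pb) h" by (simp only: eq)
  also have "\<dots> = (\<integral>\<^sup>+p. \<integral>\<^sup>+y. h (p, y) \<partial>distr M ?PB ?pb \<partial>distr M ?PA ?pa)"
    by (rule DB.nn_integral_fst[OF h', symmetric])
  also have "\<dots> = (\<integral>\<^sup>+\<omega>. \<integral>\<^sup>+y. h (?pa \<omega>, y) \<partial>distr M ?PB ?pb \<partial>M)"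
    by (rule nn_integral_distr[OF rv(1) DB.borel_measurable_nn_integral_fst[OF h']])
  finally show ?thesis .
qed


context fed begin

lemma loc_Suc: "fedavg_local G K b \<eta> I x1 xi (Suc n) = step (Suc n) (fedavg_local G K b \<eta> I x1 xi n) (xi (Suc n))"
  by (simp add: step_def Let_def)

lemma step_cong:
  assumes "\<And>l. l < K \<Longrightarrow> x l = x' l" "\<And>l j. l < K \<Longrightarrow> j < b \<Longrightarrow> y l j = y' l j" "k < K"
  shows "step t x y k = step t x' y' k"
  using assms by (simp add: step_def Let_def)

lemma loc_cong:
  assumes "\<And>t k j. 1 \<le> t \<Longrightarrow> t \<le> n \<Longrightarrow> k < K \<Longrightarrow> j < b \<Longrightarrow> xi t k j = xi' t k j"
  shows "k < K \<Longrightarrow> fedavg_local G K b \<eta> I x1 xi n k = fedavg_local G K b \<eta> I x1 xi' n k"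
  using assms
proof (induction n arbitrary: k)
  case 0 then show ?case by simp
next
  case (Suc n)
  have ih: "l < K \<Longrightarrow> fedavg_local G K b \<eta> I x1 xi n l = fedavg_local G K b \<eta> I x1 xi' n l" for l
    using Suc.IH Suc.prems(2) by (meson le_SucI)
  show ?case unfolding loc_Suc
    by (rule step_cong[OF ih]) (use Suc.prems in auto)
qed

lemma G_meas_pair:
  assumes k: "k < K" and X: "X \<in> borel_measurable N" and Y: "Y \<in> measurable N S"
  shows "(\<lambda>\<omega>. G k (X \<omega>) (Y \<omega>)) \<in> borel_measurable N"
proof -
  have "(\<lambda>\<omega>. (X \<omega>, Y \<omega>)) \<in> measurable N (borel \<Otimes>\<^sub>M S)" using X Y by (rule measurable_Pair)
  from measurable_comp[OF this G_meas[OF k]] show ?thesis by (simp add: comp_def)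
qed

lemma step_meas:
  assumes X: "\<And>l. l < K \<Longrightarrow> (\<lambda>\<omega>. X \<omega> l) \<in> borel_measurable N"
    and Y: "\<And>l j. l < K \<Longrightarrow> j < b \<Longrightarrow> (\<lambda>\<omega>. Y \<omega> l j) \<in> measurable N S"
    and k: "k < K"
  shows "(\<lambda>\<omega>. step t (X \<omega>) (Y \<omega>) k) \<in> borel_measurable N"
proof -
  have zm: "(\<lambda>\<omega>. X \<omega> l - \<eta> *\<^sub>R ((1 / real b) *\<^sub>R (\<Sum>j<b. G l (X \<omega> l) (Y \<omega> l j)))) \<in> borel_measurable N"
    if l: "l < K" for l
  proof -
    have "(\<lambda>\<omega>. G l (X \<omega> l) (Y \<omega> l j)) \<in> borel_measurable N" if "j < b" for j
      by (rule G_meas_pair[OF l X[OF l] Y[OF l that]])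
    then have "(\<lambda>\<omega>. \<Sum>j<b. G l (X \<omega> l) (Y \<omega> l j)) \<in> borel_measurable N" by auto
    then show ?thesis using X[OF l] by measurable
  qed
  show ?thesis
  proof (cases "t mod I = 0")
    case True
    have "(\<lambda>\<omega>. \<Sum>l<K. X \<omega> l - \<eta> *\<^sub>R ((1 / real b) *\<^sub>R (\<Sum>j<b. G l (X \<omega> l) (Y \<omega> l j)))) \<in> borel_measurable N"
      using zm by auto
    then show ?thesis using True by (simp add: step_def Let_def)
  next
    case False
    then show ?thesis using zm[OF k] by (simp add: step_def Let_def)
  qed
qed

lemma loc_meas:
  assumes Xi: "\<And>t k j. 1 \<le> t \<Longrightarrow> t \<le> n \<Longrightarrow> k < K \<Longrightarrow> j < b \<Longrightarrow> (\<lambda>\<omega>. Xi t k j \<omega>) \<in> measurable N S"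
  shows "k < K \<Longrightarrow> (\<lambda>\<omega>. fedavg_local G K b \<eta> I x1 (\<lambda>t k j. Xi t k j \<omega>) n k) \<in> borel_measurable N"
  using Xi
proof (induction n arbitrary: k)
  case 0 then show ?case by simp
next
  case (Suc n)
  show ?case unfolding loc_Suc
  proof (rule step_meas[OF _ _ Suc.prems(1)])
    fix l assume "l < K"
    then show "(\<lambda>\<omega>. fedavg_local G K b \<eta> I x1 (\<lambda>t k j. Xi t k j \<omega>) n l) \<in> borel_measurable N"
      using Suc.IH Suc.prems(2) by (meson le_SucI)
  next
    fix l j assume "l < K" "j < b"
    then show "(\<lambda>\<omega>. Xi (Suc n) l j \<omega>) \<in> measurable N S" using Suc.prems(2) by simp
  qed
qed

definition SK :: "(nat \<Rightarrow> 'a) measure" where "SK = PiM {..<K} (\<lambda>_. borel)"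

lemma restrict_meas:
  assumes "\<And>l. l < K \<Longrightarrow> (\<lambda>\<omega>. X \<omega> l) \<in> borel_measurable N"
  shows "(\<lambda>\<omega>. restrict (X \<omega>) {..<K}) \<in> measurable N SK"
  unfolding SK_def by (rule measurable_restrict) (use assms in auto)

lemma avg_meas: "avg \<in> borel_measurable SK"
  unfolding avg_def[abs_def] SK_def by measurable

lemma avg_restrict: "avg (restrict x {..<K}) = avg x"
  by (simp add: avg_def)

lemma dr_restrict: "dr (restrict x {..<K}) = dr x"
  by (simp add: dr_def avg_restrict)

lemma dr_meas: "dr \<in> borel_measurable SK"
proof -
  have "(\<lambda>x. (1 / real K) * (\<Sum>k<K. (norm (x k - avg x))\<^sup>2)) \<in> borel_measurable SK"
    using avg_meas unfolding SK_def by measurable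
  then show ?thesis by (simp add: dr_def[abs_def])
qed

lemma Fb_cont: "continuous_on UNIV Fb"
  by (metis Fb_deriv continuous_at_imp_continuous_on has_derivative_continuous)

lemma gb_cont: "continuous_on UNIV gb"
proof -
  have "isCont gb z" for z
  proof (rule continuous_at_eps_delta[THEN iffD2], intro allI impI)
    fix e :: real assume e: "e > 0"
    show "\<exists>d>0. \<forall>y. dist y z < d \<longrightarrow> dist (gb y) (gb z) < e"
    proof (intro exI[of _ "e / (L + 1)"] conjI allI impI)
      show "e / (L + 1) > 0" using e L by simp
      fix y assume "dist y z < e / (L + 1)"
      then have "(L + 1) * dist y z < e" using L by (simp add: field_simps)
      moreover have "dist (gb y) (gb z) \<le> L * dist y z" using gb_lip by (simp add: dist_norm)
      moreover have "L * dist y z \<le> (L + 1) * dist y z" by (simp add: distrib_right)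
      ultimately show "dist (gb y) (gb z) < e" by linarith
    qed
  qed
  then show ?thesis by (simp add: continuous_at_imp_continuous_on)
qed

lemma Fb_meas: "Fb \<in> borel_measurable borel" by (rule borel_measurable_continuous_onI[OF Fb_cont])
lemma gb_meas: "gb \<in> borel_measurable borel" by (rule borel_measurable_continuous_onI[OF gb_cont])

end


locale fedM = fed S D G gf f K b I L \<sigma> \<zeta> \<eta>
  for S :: "'b measure" and D and G :: "nat \<Rightarrow> 'a::euclidean_space \<Rightarrow> 'b \<Rightarrow> 'a" and gf f K b I L \<sigma> \<zeta> \<eta> +
  fixes M :: "'m measure" and \<xi> :: "nat \<Rightarrow> nat \<Rightarrow> nat \<Rightarrow> 'm \<Rightarrow> 'b" and T :: nat and x1 :: 'a
  assumes M_prob: "prob_space M"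
    and indep: "prob_space.indep_vars M (\<lambda>_. S) (\<lambda>i. \<xi> (fst i) (fst (snd i)) (snd (snd i))) ({1..T} \<times> {..<K} \<times> {..<b})"
    and distr_xi: "\<And>t k j. t \<in> {1..T} \<Longrightarrow> k < K \<Longrightarrow> j < b \<Longrightarrow> distr M (D k) (\<xi> t k j) = D k"
begin

interpretation MP: prob_space M by (rule M_prob)

abbreviation X :: "nat \<Rightarrow> 'm \<Rightarrow> nat \<Rightarrow> 'a" where
  "X n \<omega> \<equiv> fedavg_local G K b \<eta> I x1 (\<lambda>t k j. \<xi> t k j \<omega>) n"

abbreviation Xi' :: "nat \<times> nat \<times> nat \<Rightarrow> 'm \<Rightarrow> 'b" where
  "Xi' i \<equiv> \<xi> (fst i) (fst (snd i)) (snd (snd i))"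

definition JJ :: "(nat \<times> nat \<times> nat) set" where "JJ = {1..T} \<times> {..<K} \<times> {..<b}"

lemma xi_rv: "i \<in> JJ \<Longrightarrow> Xi' i \<in> measurable M S"
  using indep unfolding JJ_def MP.indep_vars_def by auto

lemma xi_meas: "1 \<le> t \<Longrightarrow> t \<le> T \<Longrightarrow> k < K \<Longrightarrow> j < b \<Longrightarrow> \<xi> t k j \<in> measurable M S"
  using xi_rv[of "(t, k, j)"] by (simp add: JJ_def)

lemma X_meas: "n \<le> T \<Longrightarrow> k < K \<Longrightarrow> (\<lambda>\<omega>. X n \<omega> k) \<in> borel_measurable M"
  by (rule loc_meas) (use xi_meas in auto)

lemma Bk_sub: "1 \<le> t \<Longrightarrow> t \<le> T \<Longrightarrow> Bk t \<subseteq> JJ"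
  by (auto simp: Bk_def JJ_def)

lemma Bk_ne: "Bk t \<noteq> {}"
proof -
  have "(t, 0, 0) \<in> Bk t" using K b by (simp add: Bk_def)
  then show ?thesis by blast
qed

lemma distr_blk:
  assumes t: "1 \<le> t" "t \<le> T"
  shows "distr M (PiM (Bk t) (\<lambda>_. S)) (\<lambda>\<omega>. restrict (\<lambda>i. Xi' i \<omega>) (Bk t)) = PiM (Bk t) Dm"
proof -
  have indB: "MP.indep_vars (\<lambda>_. S) Xi' (Bk t)"
    by (rule MP.indep_vars_subset[OF indep]) (use Bk_sub[OF t] in \<open>simp add: JJ_def\<close>)
  have "distr M (PiM (Bk t) (\<lambda>_. S)) (\<lambda>\<omega>. restrict (\<lambda>i. Xi' i \<omega>) (Bk t)) = PiM (Bk t) (\<lambda>i. distr M S (Xi' i))"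
    using MP.indep_vars_iff_distr_eq_PiM'[OF Bk_ne[of t], of Xi' "\<lambda>_. S"] indB xi_rv Bk_sub[OF t] by auto
  also have "\<dots> = PiM (Bk t) Dm"
  proof (rule PiM_cong[OF refl])
    fix i assume i: "i \<in> Bk t"
    then obtain k j where ikj: "i = (t, k, j)" and k: "k < K" and j: "j < b" by (auto simp: Bk_def)
    have "distr M S (Xi' i) = distr M (D k) (Xi' i)"
      by (rule distr_cong) (use D_sets[OF k] in auto)
    also have "\<dots> = D k" using distr_xi[of t k j] t k j ikj by simp
    finally show "distr M S (Xi' i) = Dm i" using ikj k by (simp add: Dm_def)
  qed
  finally show ?thesis .
qed

lemma ES:
  fixes \<Phi> :: "(nat \<Rightarrow> 'a) \<Rightarrow> ennreal"
  assumes \<Phi>m: "\<Phi> \<in> borel_measurable SK" and \<Phi>r: "\<And>x. \<Phi> (restrict x {..<K}) = \<Phi> x"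
    and t: "1 \<le> t" "t \<le> T"
  shows "(\<integral>\<^sup>+\<omega>. \<Phi> (X t \<omega>) \<partial>M) = (\<integral>\<^sup>+\<omega>. \<integral>\<^sup>+y. \<Phi> (step t (X (t - 1) \<omega>) (\<lambda>k j. y (t, k, j))) \<partial>PiM (Bk t) Dm \<partial>M)"
    and "(\<lambda>\<omega>. \<integral>\<^sup>+y. \<Phi> (step t (X (t - 1) \<omega>) (\<lambda>k j. y (t, k, j))) \<partial>PiM (Bk t) Dm) \<in> borel_measurable M"
proof -
  define A where "A = {1..<t} \<times> {..<K} \<times> {..<b}"
  define B where "B = Bk t"
  define pa where "pa \<omega> = restrict (\<lambda>i. Xi' i \<omega>) A" for \<omega>
  define pb where "pb \<omega> = restrict (\<lambda>i. Xi' i \<omega>) B" for \<omega>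
  define \<Psi> where "\<Psi> p = fedavg_local G K b \<eta> I x1 (\<lambda>t k j. p (t, k, j)) (t - 1)" for p :: "nat \<times> nat \<times> nat \<Rightarrow> 'b"
  define h where "h z = \<Phi> (step t (\<Psi> (fst z)) (\<lambda>k j. snd z (t, k, j)))" for z
  have \<Phi>c: "\<Phi> x = \<Phi> x'" if "\<And>k. k < K \<Longrightarrow> x k = x' k" for x x'
  proof -
    have "restrict x {..<K} = restrict x' {..<K}" using that by (auto simp: restrict_def)
    then show ?thesis using \<Phi>r[of x] \<Phi>r[of x'] by simp
  qed
  have AJ: "A \<subseteq> JJ" and BJ: "B \<subseteq> JJ" and AB: "A \<inter> B = {}"
    using t by (auto simp: A_def B_def Bk_def JJ_def)
  let ?PP = "PiM A (\<lambda>_. S) \<Otimes>\<^sub>M PiM B (\<lambda>_. S)"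
  have hm: "h \<in> borel_measurable ?PP"
  proof -
    have comp: "(\<lambda>z. step t (\<Psi> (fst z)) (\<lambda>k j. snd z (t, k, j)) k) \<in> borel_measurable ?PP" if k: "k < K" for k
    proof (rule step_meas[OF _ _ k])
      fix l assume l: "l < K"
      show "(\<lambda>z. \<Psi> (fst z) l) \<in> borel_measurable ?PP"
        unfolding \<Psi>_def
      proof (rule loc_meas[OF _ l])
        fix t' k' j' assume "1 \<le> t'" "t' \<le> t - 1" "k' < K" "j' < b"
        then have "(t', k', j') \<in> A" using t by (auto simp: A_def)
        then show "(\<lambda>z. fst z (t', k', j')) \<in> measurable ?PP S"
          by measurable
      qed
    next
      fix l j assume "l < K" "j < b"
      then have "(t, l, j) \<in> B" by (auto simp: B_def Bk_def)
      then show "(\<lambda>z. snd z (t, l, j)) \<in> measurable ?PP S" by measurable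
    qed
    have "(\<lambda>z. restrict (step t (\<Psi> (fst z)) (\<lambda>k j. snd z (t, k, j))) {..<K}) \<in> measurable ?PP SK"
      by (rule restrict_meas) (use comp in auto)
    from measurable_comp[OF this \<Phi>m]
    have "(\<lambda>z. \<Phi> (step t (\<Psi> (fst z)) (\<lambda>k j. snd z (t, k, j)))) \<in> borel_measurable ?PP"
      by (simp add: comp_def \<Phi>r)
    then show ?thesis by (simp add: h_def[abs_def])
  qed
  have loc_eq: "X (t - 1) \<omega> k = \<Psi> (pa \<omega>) k" if "k < K" for \<omega> k
    unfolding \<Psi>_def by (rule loc_cong[OF _ that]) (use t in \<open>auto simp: pa_def A_def\<close>)
  have inner_eq: "h (pa \<omega>, y) = \<Phi> (step t (X (t - 1) \<omega>) (\<lambda>k j. y (t, k, j)))" for \<omega> y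
    unfolding h_def fst_conv snd_conv
    by (rule \<Phi>c, rule step_cong) (use loc_eq in auto)
  have outer_eq: "\<Phi> (X t \<omega>) = h (pa \<omega>, pb \<omega>)" for \<omega>
  proof -
    have tt: "t = Suc (t - 1)" using t by simp
    have st: "X t \<omega> = step t (X (t - 1) \<omega>) (\<lambda>k j. \<xi> t k j \<omega>)"
      by (subst tt, subst loc_Suc, simp only: tt[symmetric])
    show ?thesis unfolding h_def fst_conv snd_conv
    proof (rule \<Phi>c)
      fix k assume k: "k < K"
      have "X t \<omega> k = step t (X (t - 1) \<omega>) (\<lambda>k j. \<xi> t k j \<omega>) k" by (simp only: st)
      also have "\<dots> = step t (\<Psi> (pa \<omega>)) (\<lambda>k j. pb \<omega> (t, k, j)) k"
        by (rule step_cong[OF loc_eq _ k]) (auto simp: pb_def B_def Bk_def)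
      finally show "X t \<omega> k = step t (\<Psi> (pa \<omega>)) (\<lambda>k j. pb \<omega> (t, k, j)) k" .
    qed
  qed
  have "(\<integral>\<^sup>+\<omega>. \<Phi> (X t \<omega>) \<partial>M) = (\<integral>\<^sup>+\<omega>. h (pa \<omega>, pb \<omega>) \<partial>M)"
    by (simp add: outer_eq)
  also have "\<dots> = (\<integral>\<^sup>+\<omega>. \<integral>\<^sup>+y. h (pa \<omega>, y) \<partial>distr M (PiM B (\<lambda>_. S)) pb \<partial>M)"
    unfolding pa_def pb_def by (rule transfer[OF M_prob indep[folded JJ_def] AJ BJ AB hm])
  also have "\<dots> = (\<integral>\<^sup>+\<omega>. \<integral>\<^sup>+y. \<Phi> (step t (X (t - 1) \<omega>) (\<lambda>k j. y (t, k, j))) \<partial>PiM (Bk t) Dm \<partial>M)"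
  proof -
    have "pb = (\<lambda>\<omega>. restrict (\<lambda>i. Xi' i \<omega>) (Bk t))" by (simp add: pb_def[abs_def] B_def)
    then have "distr M (PiM B (\<lambda>_. S)) pb = PiM (Bk t) Dm" using distr_blk[OF t] by (simp add: B_def)
    then show ?thesis by (simp add: inner_eq)
  qed
  finally show "(\<integral>\<^sup>+\<omega>. \<Phi> (X t \<omega>) \<partial>M) = (\<integral>\<^sup>+\<omega>. \<integral>\<^sup>+y. \<Phi> (step t (X (t - 1) \<omega>) (\<lambda>k j. y (t, k, j))) \<partial>PiM (Bk t) Dm \<partial>M)" .
  interpret PB: prob_space "PiM (Bk t) Dm" by (rule prob_space_PiM) (simp add: Dm_prob)
  have hm': "h \<in> borel_measurable (PiM A (\<lambda>_. S) \<Otimes>\<^sub>M PiM (Bk t) Dm)"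
  proof -
    have "sets (PiM (Bk t) Dm) = sets (PiM B (\<lambda>_. S))"
      by (rule sets_PiM_cong) (auto simp: B_def Bk_def Dm_def D_sets)
    then show ?thesis using hm by (simp cong: measurable_cong_sets)
  qed
  have fm: "(\<lambda>p. \<integral>\<^sup>+y. h (p, y) \<partial>PiM (Bk t) Dm) \<in> borel_measurable (PiM A (\<lambda>_. S))"
    by (rule PB.borel_measurable_nn_integral_fst[OF hm'])
  have pam: "pa \<in> measurable M (PiM A (\<lambda>_. S))"
    unfolding pa_def[abs_def] by (rule measurable_restrict) (use AJ xi_rv in auto)
  have "(\<lambda>\<omega>. \<integral>\<^sup>+y. h (pa \<omega>, y) \<partial>PiM (Bk t) Dm) \<in> borel_measurable M"
    by (rule measurable_compose[OF pam fm])
  then show "(\<lambda>\<omega>. \<integral>\<^sup>+y. \<Phi> (step t (X (t - 1) \<omega>) (\<lambda>k j. y (t, k, j))) \<partial>PiM (Bk t) Dm) \<in> borel_measurable M"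
    by (simp add: inner_eq)
qed

end


context fedM begin

interpretation MP: prob_space M by (rule M_prob)

lemma EM:
  fixes \<Phi> :: "(nat \<Rightarrow> 'a) \<Rightarrow> ennreal"
  assumes \<Phi>m: "\<Phi> \<in> borel_measurable SK" and \<Phi>r: "\<And>x. \<Phi> (restrict x {..<K}) = \<Phi> x" and n: "n \<le> T"
  shows "(\<lambda>\<omega>. \<Phi> (X n \<omega>)) \<in> borel_measurable M"
proof -
  have "(\<lambda>\<omega>. restrict (X n \<omega>) {..<K}) \<in> measurable M SK"
    by (rule restrict_meas) (use X_meas n in auto)
  from measurable_comp[OF this \<Phi>m] show ?thesis by (simp add: comp_def \<Phi>r)
qed

lemma avgF_meas: "(\<lambda>x. \<phi> (avg x)) \<in> borel_measurable SK" if "\<phi> \<in> borel_measurable borel"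
  for \<phi> :: "'a \<Rightarrow> real"
  by (rule measurable_compose[OF avg_meas that])

lemma Phi1_meas: "(\<lambda>x. ennreal (Fb (avg x) - fs)) \<in> borel_measurable SK"
  using avgF_meas[OF Fb_meas] by measurable

lemma Phig_meas: "(\<lambda>x. ennreal (c * (norm (gb (avg x)))\<^sup>2)) \<in> borel_measurable SK"
proof -
  have "(\<lambda>x. gb (avg x)) \<in> borel_measurable SK" by (rule measurable_compose[OF avg_meas gb_meas])
  then show ?thesis by measurable
qed

lemma Phig1_meas: "(\<lambda>x. ennreal ((norm (gb (avg x)))\<^sup>2)) \<in> borel_measurable SK"
proof -
  have "(\<lambda>x. gb (avg x)) \<in> borel_measurable SK" by (rule measurable_compose[OF avg_meas gb_meas])
  then show ?thesis by measurable
qed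

lemma PhiR_meas: "(\<lambda>x. ennreal (Fb (avg x) - fs + c1 * dr x + c0)) \<in> borel_measurable SK"
  using avgF_meas[OF Fb_meas] dr_meas by measurable

lemma Phid_meas: "(\<lambda>x. ennreal (c1 * dr x + c0)) \<in> borel_measurable SK"
  using dr_meas by measurable

definition Ef where "Ef fs n = (\<integral>\<^sup>+\<omega>. ennreal (Fb (avg (X n \<omega>)) - fs) \<partial>M)"
definition Eg where "Eg n = (\<integral>\<^sup>+\<omega>. ennreal ((norm (gb (avg (X n \<omega>))))\<^sup>2) \<partial>M)"
definition Ed where "Ed n = (\<integral>\<^sup>+\<omega>. ennreal (dr (X n \<omega>)) \<partial>M)"

lemma step_a:
  assumes fs: "\<And>z. fs \<le> Fb z" and t: "1 \<le> t" "t \<le> T"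
  shows "Ef fs t + ennreal (\<eta> / 2) * Eg (t - 1)
     \<le> Ef fs (t - 1) + ennreal (\<eta> * L\<^sup>2 / 2) * Ed (t - 1) + ennreal (L * \<eta>\<^sup>2 * \<sigma>\<^sup>2 / (2 * real b * real K))"
proof -
  define C1 where "C1 = L * \<eta>\<^sup>2 * \<sigma>\<^sup>2 / (2 * real b * real K)"
  have C1: "C1 \<ge> 0" using L eta by (simp add: C1_def)
  let ?P1 = "\<lambda>x. ennreal (Fb (avg x) - fs)"
  have r1: "?P1 (restrict x {..<K}) = ?P1 x" for x by (simp add: avg_restrict)
  note es = ES[OF Phi1_meas r1 t]
  have tm: "t - 1 \<le> T" using t by simp
  have gm: "(\<lambda>\<omega>. ennreal (\<eta> / 2 * (norm (gb (avg (X (t - 1) \<omega>))))\<^sup>2)) \<in> borel_measurable M"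
    by (rule EM[OF Phig_meas _ tm]) (simp add: avg_restrict)
  have "Ef fs t + ennreal (\<eta> / 2) * Eg (t - 1)
      = (\<integral>\<^sup>+\<omega>. \<integral>\<^sup>+y. ?P1 (step t (X (t - 1) \<omega>) (\<lambda>k j. y (t, k, j))) \<partial>PiM (Bk t) Dm \<partial>M)
        + (\<integral>\<^sup>+\<omega>. ennreal (\<eta> / 2 * (norm (gb (avg (X (t - 1) \<omega>))))\<^sup>2) \<partial>M)"
  proof -
    have "ennreal (\<eta> / 2) * Eg (t - 1) = (\<integral>\<^sup>+\<omega>. ennreal (\<eta> / 2) * ennreal ((norm (gb (avg (X (t - 1) \<omega>))))\<^sup>2) \<partial>M)"
      unfolding Eg_def
      by (rule nn_integral_cmult[symmetric]) (rule EM[OF Phig1_meas _ tm], simp add: avg_restrict)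
    also have "\<dots> = (\<integral>\<^sup>+\<omega>. ennreal (\<eta> / 2 * (norm (gb (avg (X (t - 1) \<omega>))))\<^sup>2) \<partial>M)"
      using eta by (intro nn_integral_cong) (simp add: ennreal_mult[symmetric])
    finally show ?thesis unfolding Ef_def es(1) by simp
  qed
  also have "\<dots> = (\<integral>\<^sup>+\<omega>. (\<integral>\<^sup>+y. ?P1 (step t (X (t - 1) \<omega>) (\<lambda>k j. y (t, k, j))) \<partial>PiM (Bk t) Dm)
        + ennreal (\<eta> / 2 * (norm (gb (avg (X (t - 1) \<omega>))))\<^sup>2) \<partial>M)"
    by (rule nn_integral_add[OF es(2) gm, symmetric])
  also have "\<dots> \<le> (\<integral>\<^sup>+\<omega>. ennreal (Fb (avg (X (t - 1) \<omega>)) - fs + \<eta> * L\<^sup>2 / 2 * dr (X (t - 1) \<omega>) + C1) \<partial>M)"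
    by (rule nn_integral_mono) (unfold C1_def, rule desc_step[OF fs])
  also have "\<dots> = (\<integral>\<^sup>+\<omega>. ennreal (Fb (avg (X (t - 1) \<omega>)) - fs) + (ennreal (\<eta> * L\<^sup>2 / 2) * ennreal (dr (X (t - 1) \<omega>)) + ennreal C1) \<partial>M)"
  proof (rule nn_integral_cong)
    fix \<omega>
    have a: "0 \<le> Fb (avg (X (t - 1) \<omega>)) - fs" using fs by simp
    have d: "0 \<le> \<eta> * L\<^sup>2 / 2 * dr (X (t - 1) \<omega>)" using eta dr_nonneg by simp
    show "ennreal (Fb (avg (X (t - 1) \<omega>)) - fs + \<eta> * L\<^sup>2 / 2 * dr (X (t - 1) \<omega>) + C1)
        = ennreal (Fb (avg (X (t - 1) \<omega>)) - fs) + (ennreal (\<eta> * L\<^sup>2 / 2) * ennreal (dr (X (t - 1) \<omega>)) + ennreal C1)"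
      using a d C1 eta dr_nonneg by (simp add: ennreal_plus[symmetric] ennreal_mult[symmetric] add.assoc del: ennreal_plus)
  qed
  also have "\<dots> = Ef fs (t - 1) + (ennreal (\<eta> * L\<^sup>2 / 2) * Ed (t - 1) + ennreal C1)"
  proof -
    have m1: "(\<lambda>\<omega>. ennreal (Fb (avg (X (t - 1) \<omega>)) - fs)) \<in> borel_measurable M"
      by (rule EM[OF Phi1_meas _ tm]) (simp add: avg_restrict)
    have m2: "(\<lambda>\<omega>. ennreal (dr (X (t - 1) \<omega>))) \<in> borel_measurable M"
      using EM[OF Phid_meas[of 1 0] _ tm] by (simp add: dr_restrict)
    have "(\<integral>\<^sup>+\<omega>. ennreal (\<eta> * L\<^sup>2 / 2) * ennreal (dr (X (t - 1) \<omega>)) + ennreal C1 \<partial>M)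
        = ennreal (\<eta> * L\<^sup>2 / 2) * Ed (t - 1) + ennreal C1"
      unfolding Ed_def using m2 by (simp add: nn_integral_add nn_integral_cmult MP.emeasure_space_1)
    then show ?thesis unfolding Ef_def using m1 m2 by (simp add: nn_integral_add)
  qed
  finally show ?thesis by (simp add: C1_def add.assoc)
qed

end


lemma drift_real:
  fixes u m E P Q :: real
  assumes u: "u \<ge> 2" and m: "0 \<le> m" "m \<le> u - 2" and E: "0 \<le> E" "E * u\<^sup>2 \<le> 1/81"
    and P: "0 \<le> P" and Q: "0 \<le> Q"
  shows "(1 + 1 / (2 * (u - 1)) + 2 * (1 + 1 / (1 / (2 * (u - 1)))) * E) * (m * (10 * (u - 1) * P + 6 * Q))
          + (2 * (1 + 1 / (1 / (2 * (u - 1)))) * P + Q) \<le> (m + 1) * (10 * (u - 1) * P + 6 * Q)"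
proof -
  define \<beta> where "\<beta> = 10 * (u - 1) * P + 6 * Q"
  have \<beta>: "\<beta> \<ge> 0" using u P Q by (simp add: \<beta>_def)
  have inv: "1 + 1 / (1 / (2 * (u - 1))) = 2 * u - 1" using u by simp
  define \<rho> where "\<rho> = (u - 2) / (2 * (u - 1)) + 4 / 81"
  define r where "r = (1 / (2 * (u - 1)) + 2 * (2 * u - 1) * E) * m"
  have r1: "m / (2 * (u - 1)) \<le> (u - 2) / (2 * (u - 1))" using u m by (intro divide_right_mono) auto
  have r2: "2 * (2 * u - 1) * E * m \<le> 4 / 81"
  proof -
    have "2 * (2 * u - 1) * E * m \<le> 2 * (2 * u - 1) * E * (u - 2)"
      using u m E by (intro mult_left_mono) auto
    also have "\<dots> = E * (2 * ((2 * u - 1) * (u - 2)))" by (simp add: algebra_simps)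
    also have "\<dots> \<le> E * (4 * u\<^sup>2)"
    proof (intro mult_left_mono E(1))
      have "(2 * u - 1) * (u - 2) = 2 * u\<^sup>2 - 5 * u + 2" by (simp add: power2_eq_square algebra_simps)
      then show "2 * ((2 * u - 1) * (u - 2)) \<le> 4 * u\<^sup>2" using u by simp
    qed
    also have "\<dots> = 4 * (E * u\<^sup>2)" by simp
    also have "\<dots> \<le> 4 / 81" using E(2) by simp
    finally show ?thesis .
  qed
  have rr: "r \<le> \<rho>" unfolding r_def \<rho>_def using r1 r2 by (simp add: algebra_simps)
  have h1: "\<rho> * (10 * (u - 1)) + 2 * (2 * u - 1) \<le> 10 * (u - 1)"
  proof -
    have "\<rho> * (10 * (u - 1)) = 5 * (u - 2) + 40 * (u - 1) / 81"
      using u by (simp add: \<rho>_def field_simps)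
    then show ?thesis using u by simp
  qed
  have h2: "\<rho> * 6 + 1 \<le> 6"
  proof -
    have a: "(u - 2) / (2 * (u - 1)) \<le> 1 / 2" using u by (simp add: field_simps)
    have "\<rho> * 6 + 1 = 6 * ((u - 2) / (2 * (u - 1))) + 24 / 81 + 1" by (simp add: \<rho>_def algebra_simps)
    then show ?thesis using a by linarith
  qed
  have "(1 + 1 / (2 * (u - 1)) + 2 * (2 * u - 1) * E) * (m * \<beta>) + (2 * (2 * u - 1) * P + Q)
      = m * \<beta> + (r * \<beta> + (2 * (2 * u - 1) * P + Q))" by (simp add: r_def algebra_simps)
  also have "r * \<beta> \<le> \<rho> * \<beta>" using rr \<beta> by (rule mult_right_mono)
  also have "\<rho> * \<beta> + (2 * (2 * u - 1) * P + Q) = (\<rho> * (10 * (u - 1)) + 2 * (2 * u - 1)) * P + (\<rho> * 6 + 1) * Q"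
    by (simp add: \<beta>_def algebra_simps)
  also have "\<dots> \<le> (10 * (u - 1)) * P + 6 * Q"
    using h1 h2 P Q by (intro add_mono mult_right_mono) auto
  finally show ?thesis unfolding inv by (simp add: \<beta>_def algebra_simps)
qed

lemma sum_split_nat: "(\<Sum>t<a + n2. f t) = (\<Sum>t<a. f t) + (\<Sum>s<n2. f (a + s))"
  for a n2 :: nat and f :: "nat \<Rightarrow> real"
  by (induction n2) (simp_all add: add.assoc)

lemma sum_id_real: "(\<Sum>s<n. real s) = real n * (real n - 1) / 2"
  by (induction n) (simp_all add: field_simps)

lemma sum_mod: "I \<ge> 1 \<Longrightarrow> (\<Sum>t<m * I. real (t mod I)) = real m * (real I * (real I - 1) / 2)"
proof (induction m)
  case 0 then show ?case by simp
next
  case (Suc m)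
  have eq: "Suc m * I = m * I + I" by simp
  have "(\<Sum>t<Suc m * I. real (t mod I)) = (\<Sum>t<m * I. real (t mod I)) + (\<Sum>s<I. real ((m * I + s) mod I))"
    unfolding eq by (rule sum_split_nat)
  also have "(\<Sum>s<I. real ((m * I + s) mod I)) = (\<Sum>s<I. real s)"
    by (intro sum.cong) auto
  also have "\<dots> = real I * (real I - 1) / 2" by (rule sum_id_real)
  also have "(\<Sum>t<m * I. real (t mod I)) = real m * (real I * (real I - 1) / 2)" by (rule Suc.IH[OF Suc.prems])
  finally show ?case by (simp add: distrib_right)
qed

context fedM begin

interpretation MP: prob_space M by (rule M_prob)

lemma X0: "X 0 \<omega> = (\<lambda>k. x1)" by simp

lemma Ed0: "Ed 0 = 0"
  unfolding Ed_def by (simp add: dr_def avg_const)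

lemma Ef0: "Ef fs 0 = ennreal (Fb x1 - fs)"
  unfolding Ef_def by (simp add: avg_const MP.emeasure_space_1)

lemma X_step: "1 \<le> t \<Longrightarrow> X t \<omega> = step t (X (t - 1) \<omega>) (\<lambda>k j. \<xi> t k j \<omega>)"
proof -
  assume t: "1 \<le> t"
  then have tt: "t = Suc (t - 1)" by simp
  show ?thesis by (subst tt, subst loc_Suc, simp only: tt[symmetric])
qed

lemma step_b0: "1 \<le> t \<Longrightarrow> t mod I = 0 \<Longrightarrow> Ed t = 0"
  unfolding Ed_def by (simp add: X_step drift_avg)

lemma step_b1:
  assumes t: "1 \<le> t" "t \<le> T" and tI: "t mod I \<noteq> 0" and al: "\<alpha> > 0"
  shows "Ed t \<le> ennreal (1 + \<alpha> + 2 * (1 + 1/\<alpha>) * \<eta>\<^sup>2 * L\<^sup>2) * Ed (t - 1)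
                + ennreal (2 * (1 + 1/\<alpha>) * \<eta>\<^sup>2 * \<zeta>\<^sup>2 + \<eta>\<^sup>2 * \<sigma>\<^sup>2 / real b)"
proof -
  let ?P = "\<lambda>x. ennreal (dr x)"
  have r: "?P (restrict x {..<K}) = ?P x" for x by (simp add: dr_restrict)
  have pm: "?P \<in> borel_measurable SK" using Phid_meas[of 1 0] by simp
  note es = ES[OF pm r t]
  have tm: "t - 1 \<le> T" using t by simp
  define q where "q = 1 + \<alpha> + 2 * (1 + 1/\<alpha>) * \<eta>\<^sup>2 * L\<^sup>2"
  define c where "c = 2 * (1 + 1/\<alpha>) * \<eta>\<^sup>2 * \<zeta>\<^sup>2 + \<eta>\<^sup>2 * \<sigma>\<^sup>2 / real b"
  have q: "q \<ge> 0" using al by (simp add: q_def)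
  have c: "c \<ge> 0" using al by (simp add: c_def)
  have "Ed t = (\<integral>\<^sup>+\<omega>. \<integral>\<^sup>+y. ?P (step t (X (t - 1) \<omega>) (\<lambda>k j. y (t, k, j))) \<partial>PiM (Bk t) Dm \<partial>M)"
    unfolding Ed_def by (rule es(1))
  also have "\<dots> \<le> (\<integral>\<^sup>+\<omega>. ennreal (q * dr (X (t - 1) \<omega>) + c) \<partial>M)"
  proof (rule nn_integral_mono)
    fix \<omega>
    show "(\<integral>\<^sup>+y. ?P (step t (X (t - 1) \<omega>) (\<lambda>k j. y (t, k, j))) \<partial>PiM (Bk t) Dm) \<le> ennreal (q * dr (X (t - 1) \<omega>) + c)"
      using drift_step[OF tI al, of "X (t - 1) \<omega>"] by (simp add: q_def c_def add.assoc)
  qed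
  also have "\<dots> = (\<integral>\<^sup>+\<omega>. ennreal q * ennreal (dr (X (t - 1) \<omega>)) + ennreal c \<partial>M)"
    using q c dr_nonneg by (intro nn_integral_cong) (simp add: ennreal_plus[symmetric] ennreal_mult[symmetric] del: ennreal_plus)
  also have "\<dots> = ennreal q * Ed (t - 1) + ennreal c"
  proof -
    have m2: "(\<lambda>\<omega>. ennreal (dr (X (t - 1) \<omega>))) \<in> borel_measurable M"
      using EM[OF pm r tm] by simp
    show ?thesis unfolding Ed_def using m2 by (simp add: nn_integral_add nn_integral_cmult MP.emeasure_space_1)
  qed
  finally show ?thesis by (simp add: q_def c_def)
qed

lemma etaLsq: "\<eta>\<^sup>2 * L\<^sup>2 * (real I)\<^sup>2 \<le> 1/81"
proof -
  have "\<eta>\<^sup>2 * L\<^sup>2 * (real I)\<^sup>2 = (\<eta> * L * real I)\<^sup>2" by (simp add: power_mult_distrib)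
  also have "\<dots> \<le> (1/9)\<^sup>2" using etaLI eta L by (intro power_mono) auto
  finally show ?thesis by (simp add: power2_eq_square)
qed

lemma drift_bound:
  "n \<le> T \<Longrightarrow> Ed n \<le> ennreal (real (n mod I) * (10 * (real I - 1) * (\<eta>\<^sup>2 * \<zeta>\<^sup>2) + 6 * (\<eta>\<^sup>2 * \<sigma>\<^sup>2 / real b)))"
proof (induction n)
  case 0 then show ?case by (simp add: Ed0)
next
  case (Suc n)
  define \<beta> where "\<beta> = 10 * (real I - 1) * (\<eta>\<^sup>2 * \<zeta>\<^sup>2) + 6 * (\<eta>\<^sup>2 * \<sigma>\<^sup>2 / real b)"
  have \<beta>: "\<beta> \<ge> 0" using I by (simp add: \<beta>_def)
  show ?case
  proof (cases "Suc n mod I = 0")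
    case True
    then show ?thesis using step_b0[of "Suc n"] by simp
  next
    case False
    then have I2: "I \<ge> 2" using I by (cases "I = 1") auto
    have md: "Suc n mod I = Suc (n mod I)" using False by (simp add: mod_Suc split: if_splits)
    have lt: "Suc n mod I < I" using I by simp
    have mle: "n mod I \<le> I - 2" using lt md by linarith
    define \<alpha> where "\<alpha> = 1 / (2 * (real I - 1))"
    have al: "\<alpha> > 0" using I2 by (simp add: \<alpha>_def)
    have IH: "Ed n \<le> ennreal (real (n mod I) * \<beta>)" using Suc by (simp add: \<beta>_def)
    have "Ed (Suc n) \<le> ennreal (1 + \<alpha> + 2 * (1 + 1/\<alpha>) * \<eta>\<^sup>2 * L\<^sup>2) * Ed n
                + ennreal (2 * (1 + 1/\<alpha>) * \<eta>\<^sup>2 * \<zeta>\<^sup>2 + \<eta>\<^sup>2 * \<sigma>\<^sup>2 / real b)"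
      using step_b1[of "Suc n", OF _ Suc.prems False al] by simp
    also have "\<dots> \<le> ennreal (1 + \<alpha> + 2 * (1 + 1/\<alpha>) * \<eta>\<^sup>2 * L\<^sup>2) * ennreal (real (n mod I) * \<beta>)
                + ennreal (2 * (1 + 1/\<alpha>) * \<eta>\<^sup>2 * \<zeta>\<^sup>2 + \<eta>\<^sup>2 * \<sigma>\<^sup>2 / real b)"
      using IH by (intro add_mono mult_left_mono) auto
    also have "\<dots> = ennreal ((1 + \<alpha> + 2 * (1 + 1/\<alpha>) * \<eta>\<^sup>2 * L\<^sup>2) * (real (n mod I) * \<beta>)
                + (2 * (1 + 1/\<alpha>) * \<eta>\<^sup>2 * \<zeta>\<^sup>2 + \<eta>\<^sup>2 * \<sigma>\<^sup>2 / real b))"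
      using al \<beta> by (simp add: ennreal_plus[symmetric] ennreal_mult[symmetric] del: ennreal_plus)
    also have "\<dots> \<le> ennreal (real (Suc n mod I) * \<beta>)"
    proof (rule ennreal_leI)
      have E: "0 \<le> \<eta>\<^sup>2 * L\<^sup>2" "\<eta>\<^sup>2 * L\<^sup>2 * (real I)\<^sup>2 \<le> 1/81" using etaLsq by auto
      have m: "real (n mod I) \<le> real I - 2" using mle I2 by linarith
      have u2: "real I \<ge> 2" using I2 by simp
      have m0: "0 \<le> real (n mod I)" by simp
      have P0: "0 \<le> \<eta>\<^sup>2 * \<zeta>\<^sup>2" by simp
      have Q0: "0 \<le> \<eta>\<^sup>2 * \<sigma>\<^sup>2 / real b" by simp
      have "(1 + \<alpha> + 2 * (1 + 1 / \<alpha>) * (\<eta>\<^sup>2 * L\<^sup>2)) * (real (n mod I) * \<beta>)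
          + (2 * (1 + 1 / \<alpha>) * (\<eta>\<^sup>2 * \<zeta>\<^sup>2) + \<eta>\<^sup>2 * \<sigma>\<^sup>2 / real b) \<le> (real (n mod I) + 1) * \<beta>"
        unfolding \<alpha>_def \<beta>_def
        by (rule drift_real[OF u2 m0 m E(1) E(2) P0 Q0])
      then show "(1 + \<alpha> + 2 * (1 + 1/\<alpha>) * \<eta>\<^sup>2 * L\<^sup>2) * (real (n mod I) * \<beta>)
                + (2 * (1 + 1/\<alpha>) * \<eta>\<^sup>2 * \<zeta>\<^sup>2 + \<eta>\<^sup>2 * \<sigma>\<^sup>2 / real b) \<le> real (Suc n mod I) * \<beta>"
        by (simp add: md mult.assoc algebra_simps)
    qed
    finally show ?thesis by (simp add: \<beta>_def)
  qed
qed

end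


lemma final_real:
  fixes b K T I L \<sigma> \<zeta> F0 \<eta> S0 :: real
  assumes b: "b \<ge> 1" and K: "K \<ge> 1" and T: "T > 0" and I: "I \<ge> 1" and L: "L \<ge> 0" and F0: "F0 \<ge> 0"
    and eta: "\<eta> = sqrt (b * K / T)" and S0: "S0 = T * (I - 1) / 2"
  shows "1 / T * (2 / \<eta> * (F0 + \<eta> * L\<^sup>2 / 2 * (S0 * (10 * (I - 1) * (\<eta>\<^sup>2 * \<zeta>\<^sup>2) + 6 * (\<eta>\<^sup>2 * \<sigma>\<^sup>2 / b)))
            + T * (L * \<eta>\<^sup>2 * \<sigma>\<^sup>2 / (2 * b * K))))
       \<le> 2 * F0 / (sqrt (b * K) * sqrt T) + 2 * L * \<sigma>\<^sup>2 / (sqrt (b * K) * sqrt T)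
         + 3 * L\<^sup>2 * b * K * (I - 1) / T * \<sigma>\<^sup>2 + 5 * L\<^sup>2 * b * K * (I - 1)\<^sup>2 / T * \<zeta>\<^sup>2"
proof -
  define s where "s = sqrt (b * K)"
  define r where "r = sqrt T"
  have s: "s > 0" using b K by (simp add: s_def)
  have r: "r > 0" using T by (simp add: r_def)
  have r2: "r\<^sup>2 = T" using T by (simp add: r_def)
  have s2: "s\<^sup>2 = b * K" using b K by (simp add: s_def)
  have et: "\<eta> = s / r" by (simp add: eta s_def r_def real_sqrt_divide)
  have e2: "\<eta>\<^sup>2 = b * K / T" using s2 r2 by (simp add: et power_divide)
  have ep: "\<eta> > 0" using s r by (simp add: et)
  have e1: "1 / T * (2 / \<eta> * F0) = 2 * F0 / (s * r)"
  proof -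
    have Tr: "T = r * r" using r2 by (simp add: power2_eq_square)
    show ?thesis unfolding Tr et using r s by (simp add: field_simps)
  qed
  have e3: "1 / T * (2 / \<eta> * (T * (L * \<eta>\<^sup>2 * \<sigma>\<^sup>2 / (2 * b * K)))) = L * \<sigma>\<^sup>2 / (s * r)"
  proof -
    have "1 / T * (2 / \<eta> * (T * (L * \<eta>\<^sup>2 * \<sigma>\<^sup>2 / (2 * b * K)))) = L * \<eta> * \<sigma>\<^sup>2 / (b * K)"
      using T ep b K by (simp add: field_simps power2_eq_square)
    also have "\<dots> = L * \<sigma>\<^sup>2 / (s * r)"
      using s r s2 b K by (simp add: et field_simps power2_eq_square)
    finally show ?thesis .
  qed
  have e4: "1 / T * (2 / \<eta> * (\<eta> * L\<^sup>2 / 2 * (S0 * (10 * (I - 1) * (\<eta>\<^sup>2 * \<zeta>\<^sup>2) + 6 * (\<eta>\<^sup>2 * \<sigma>\<^sup>2 / b)))))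
      = 5 * L\<^sup>2 * b * K * (I - 1)\<^sup>2 / T * \<zeta>\<^sup>2 + 3 * L\<^sup>2 * K * (I - 1) / T * \<sigma>\<^sup>2"
  proof -
    have "1 / T * (2 / \<eta> * (\<eta> * L\<^sup>2 / 2 * (S0 * (10 * (I - 1) * (\<eta>\<^sup>2 * \<zeta>\<^sup>2) + 6 * (\<eta>\<^sup>2 * \<sigma>\<^sup>2 / b)))))
        = L\<^sup>2 * (I - 1) / 2 * (10 * (I - 1) * (\<eta>\<^sup>2 * \<zeta>\<^sup>2) + 6 * (\<eta>\<^sup>2 * \<sigma>\<^sup>2 / b))"
      using T ep by (simp add: S0 field_simps)
    also have "\<dots> = 5 * L\<^sup>2 * b * K * (I - 1)\<^sup>2 / T * \<zeta>\<^sup>2 + 3 * L\<^sup>2 * K * (I - 1) / T * \<sigma>\<^sup>2"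
      unfolding e2 using T b by (simp add: field_simps power2_eq_square)
    finally show ?thesis .
  qed
  have le: "3 * L\<^sup>2 * K * (I - 1) / T * \<sigma>\<^sup>2 \<le> 3 * L\<^sup>2 * b * K * (I - 1) / T * \<sigma>\<^sup>2"
  proof -
    have A: "0 \<le> 3 * L\<^sup>2 * K * (I - 1)" using K I by simp
    have "1 * (3 * L\<^sup>2 * K * (I - 1)) \<le> b * (3 * L\<^sup>2 * K * (I - 1))"
      by (rule mult_right_mono[OF b A])
    then have "3 * L\<^sup>2 * K * (I - 1) \<le> 3 * L\<^sup>2 * b * K * (I - 1)" by (simp add: algebra_simps)
    then have "3 * L\<^sup>2 * K * (I - 1) / T \<le> 3 * L\<^sup>2 * b * K * (I - 1) / T"
      using T by (intro divide_right_mono) auto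
    then show ?thesis by (intro mult_right_mono) auto
  qed
  have le2: "L * \<sigma>\<^sup>2 / (s * r) \<le> 2 * L * \<sigma>\<^sup>2 / (s * r)"
    using L s r by (simp add: divide_right_mono)
  have "1 / T * (2 / \<eta> * (F0 + \<eta> * L\<^sup>2 / 2 * (S0 * (10 * (I - 1) * (\<eta>\<^sup>2 * \<zeta>\<^sup>2) + 6 * (\<eta>\<^sup>2 * \<sigma>\<^sup>2 / b)))
            + T * (L * \<eta>\<^sup>2 * \<sigma>\<^sup>2 / (2 * b * K))))
      = 1 / T * (2 / \<eta> * F0) + 1 / T * (2 / \<eta> * (\<eta> * L\<^sup>2 / 2 * (S0 * (10 * (I - 1) * (\<eta>\<^sup>2 * \<zeta>\<^sup>2) + 6 * (\<eta>\<^sup>2 * \<sigma>\<^sup>2 / b)))))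
        + 1 / T * (2 / \<eta> * (T * (L * \<eta>\<^sup>2 * \<sigma>\<^sup>2 / (2 * b * K))))"
    by (simp add: distrib_left)
  also have "\<dots> = 2 * F0 / (s * r) + (5 * L\<^sup>2 * b * K * (I - 1)\<^sup>2 / T * \<zeta>\<^sup>2 + 3 * L\<^sup>2 * K * (I - 1) / T * \<sigma>\<^sup>2) + L * \<sigma>\<^sup>2 / (s * r)"
    unfolding e1 e3 e4 ..
  also have "\<dots> \<le> 2 * F0 / (s * r) + 2 * L * \<sigma>\<^sup>2 / (s * r) + 3 * L\<^sup>2 * b * K * (I - 1) / T * \<sigma>\<^sup>2 + 5 * L\<^sup>2 * b * K * (I - 1)\<^sup>2 / T * \<zeta>\<^sup>2"
    using le le2 by linarith
  finally show ?thesis by (simp add: s_def r_def)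
qed


lemma sum_shift1: "(\<Sum>t\<in>{1..n}. g (t - 1)) = (\<Sum>t<n. g t)"
  for n :: nat and g :: "nat \<Rightarrow> ennreal"
proof (induction n)
  case 0 then show ?case by simp
next
  case (Suc n) then show ?case by (simp add: add.commute)
qed

context fedM begin

interpretation MP: prob_space M by (rule M_prob)

lemma sum_a:
  assumes fs: "\<And>z. fs \<le> Fb z"
  shows "n \<le> T \<Longrightarrow> Ef fs n + ennreal (\<eta> / 2) * (\<Sum>t<n. Eg t)
     \<le> Ef fs 0 + ennreal (\<eta> * L\<^sup>2 / 2) * (\<Sum>t<n. Ed t) + ennreal (real n * (L * \<eta>\<^sup>2 * \<sigma>\<^sup>2 / (2 * real b * real K)))"
proof (induction n)
  case 0 then show ?case by simp
next
  case (Suc n)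
  define C1 where "C1 = L * \<eta>\<^sup>2 * \<sigma>\<^sup>2 / (2 * real b * real K)"
  have C1: "C1 \<ge> 0" using L eta by (simp add: C1_def)
  define a where "a = ennreal (\<eta> / 2)"
  define c where "c = ennreal (\<eta> * L\<^sup>2 / 2)"
  have sa: "Ef fs (Suc n) + a * Eg n \<le> Ef fs n + c * Ed n + ennreal C1"
    using step_a[OF fs, of "Suc n"] Suc.prems by (simp add: a_def c_def C1_def)
  have IH: "Ef fs n + a * (\<Sum>t<n. Eg t) \<le> Ef fs 0 + c * (\<Sum>t<n. Ed t) + ennreal (real n * C1)"
    using Suc.IH Suc.prems by (simp add: a_def c_def C1_def)
  have "Ef fs (Suc n) + a * (\<Sum>t<Suc n. Eg t) = (Ef fs (Suc n) + a * Eg n) + a * (\<Sum>t<n. Eg t)"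
    by (simp add: distrib_left ac_simps)
  also have "\<dots> \<le> (Ef fs n + c * Ed n + ennreal C1) + a * (\<Sum>t<n. Eg t)"
    using sa by (rule add_right_mono)
  also have "\<dots> = (Ef fs n + a * (\<Sum>t<n. Eg t)) + (c * Ed n + ennreal C1)"
    by (simp add: ac_simps)
  also have "\<dots> \<le> (Ef fs 0 + c * (\<Sum>t<n. Ed t) + ennreal (real n * C1)) + (c * Ed n + ennreal C1)"
    using IH by (rule add_right_mono)
  also have "\<dots> = Ef fs 0 + c * (\<Sum>t<Suc n. Ed t) + ennreal (real (Suc n) * C1)"
  proof -
    have "ennreal (real (Suc n) * C1) = ennreal (real n * C1) + ennreal C1"
      using C1 by (simp add: ennreal_plus[symmetric] distrib_right del: ennreal_plus)
    then show ?thesis by (simp add: distrib_left ac_simps)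
  qed
  finally show ?case by (simp add: a_def c_def C1_def)
qed

lemma final_locale:
  assumes T1: "T \<ge> 1" and TI: "I dvd T" and eta_eq: "\<eta> = sqrt (real b * real K / real T)"
    and bdd: "bdd_below (range Fb)"
  shows "ennreal (1 / real T) *
           (\<Sum>t\<in>{1..T}. \<integral>\<^sup>+ \<omega>. ennreal ((norm ((1 / real K) *\<^sub>R (\<Sum>k<K.
               gf k (fedavg_avg G K b \<eta> I x1 (\<lambda>t k j. \<xi> t k j \<omega>) t))))\<^sup>2) \<partial>M)
         \<le> ennreal (2 * (Fb x1 - (INF x. Fb x)) / (sqrt (real b * real K) * sqrt (real T))
           + 2 * L * \<sigma>\<^sup>2 / (sqrt (real b * real K) * sqrt (real T))
           + 3 * L\<^sup>2 * real b * real K * (real I - 1) / real T * \<sigma>\<^sup>2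
           + 5 * L\<^sup>2 * real b * real K * (real I - 1)\<^sup>2 / real T * \<zeta>\<^sup>2)"
proof -
  define fs where "fs = (INF x. Fb x)"
  have fs: "fs \<le> Fb z" for z unfolding fs_def by (rule cINF_lower[OF bdd]) simp
  define C1 where "C1 = L * \<eta>\<^sup>2 * \<sigma>\<^sup>2 / (2 * real b * real K)"
  have C1: "C1 \<ge> 0" using L eta by (simp add: C1_def)
  define \<beta> where "\<beta> = 10 * (real I - 1) * (\<eta>\<^sup>2 * \<zeta>\<^sup>2) + 6 * (\<eta>\<^sup>2 * \<sigma>\<^sup>2 / real b)"
  have \<beta>: "\<beta> \<ge> 0" using I by (simp add: \<beta>_def)
  define S0 where "S0 = (\<Sum>t<T. real (t mod I))"
  have S0: "S0 = real T * (real I - 1) / 2"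
  proof -
    obtain m where Tm: "T = m * I" using TI by (auto simp: dvd_def mult.commute)
    have "S0 = real m * (real I * (real I - 1) / 2)" unfolding S0_def Tm by (rule sum_mod[OF I])
    then show ?thesis by (simp add: Tm)
  qed
  have S0nn: "S0 \<ge> 0" by (simp add: S0_def sum_nonneg)
  define F0 where "F0 = Fb x1 - fs"
  have F0: "F0 \<ge> 0" using fs[of x1] by (simp add: F0_def)
  have Tp: "real T > 0" using T1 by simp
  have ep: "\<eta> > 0" using eta_eq Tp b K by simp
  have LHS: "(\<Sum>t\<in>{1..T}. \<integral>\<^sup>+ \<omega>. ennreal ((norm ((1 / real K) *\<^sub>R (\<Sum>k<K.
               gf k (fedavg_avg G K b \<eta> I x1 (\<lambda>t k j. \<xi> t k j \<omega>) t))))\<^sup>2) \<partial>M) = (\<Sum>t<T. Eg t)"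
  proof -
    have "(\<Sum>t\<in>{1..T}. \<integral>\<^sup>+ \<omega>. ennreal ((norm ((1 / real K) *\<^sub>R (\<Sum>k<K.
               gf k (fedavg_avg G K b \<eta> I x1 (\<lambda>t k j. \<xi> t k j \<omega>) t))))\<^sup>2) \<partial>M) = (\<Sum>t\<in>{1..T}. Eg (t - 1))"
      by (intro sum.cong refl) (simp add: Eg_def fedavg_avg_def gb_def avg_def)
    also have "\<dots> = (\<Sum>t<T. Eg t)" by (rule sum_shift1)
    finally show ?thesis .
  qed
  have Ed_sum: "(\<Sum>t<T. Ed t) \<le> ennreal (S0 * \<beta>)"
  proof -
    have "(\<Sum>t<T. Ed t) \<le> (\<Sum>t<T. ennreal (real (t mod I) * \<beta>))"
      by (intro sum_mono) (use drift_bound in \<open>simp add: \<beta>_def\<close>)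
    also have "\<dots> = ennreal (\<Sum>t<T. real (t mod I) * \<beta>)" using \<beta> by (simp add: sum_ennreal)
    also have "\<dots> = ennreal (S0 * \<beta>)" by (simp add: S0_def sum_distrib_right)
    finally show ?thesis .
  qed
  define W where "W = F0 + \<eta> * L\<^sup>2 / 2 * (S0 * \<beta>) + real T * C1"
  have "ennreal (\<eta> / 2) * (\<Sum>t<T. Eg t) \<le> Ef fs T + ennreal (\<eta> / 2) * (\<Sum>t<T. Eg t)" by simp
  also have "\<dots> \<le> Ef fs 0 + ennreal (\<eta> * L\<^sup>2 / 2) * (\<Sum>t<T. Ed t) + ennreal (real T * C1)"
    using sum_a[OF fs order_refl] by (simp add: C1_def)
  also have "\<dots> \<le> ennreal F0 + ennreal (\<eta> * L\<^sup>2 / 2) * ennreal (S0 * \<beta>) + ennreal (real T * C1)"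
    using Ed_sum by (intro add_mono mult_left_mono) (auto simp: Ef0 F0_def)
  also have "\<dots> = ennreal W"
    using F0 C1 eta S0nn \<beta> by (simp add: W_def ennreal_plus[symmetric] ennreal_mult[symmetric] del: ennreal_plus)
  finally have Wb: "ennreal (\<eta> / 2) * (\<Sum>t<T. Eg t) \<le> ennreal W" .
  have Wnn: "W \<ge> 0" using F0 C1 eta S0nn \<beta> L by (simp add: W_def)
  have "(\<Sum>t<T. Eg t) = ennreal (2 / \<eta>) * (ennreal (\<eta> / 2) * (\<Sum>t<T. Eg t))"
    using ep by (simp add: mult.assoc[symmetric] ennreal_mult[symmetric] del: ennreal_mult)
  also have "\<dots> \<le> ennreal (2 / \<eta>) * ennreal W" using Wb by (rule mult_left_mono) simp
  finally have SE: "(\<Sum>t<T. Eg t) \<le> ennreal (2 / \<eta>) * ennreal W" .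
  have "ennreal (1 / real T) * (\<Sum>t<T. Eg t) \<le> ennreal (1 / real T) * (ennreal (2 / \<eta>) * ennreal W)"
    using SE by (rule mult_left_mono) simp
  also have "\<dots> = ennreal (1 / real T * (2 / \<eta> * W))"
    using ep Wnn Tp by (simp add: ennreal_mult[symmetric] del: ennreal_mult)
  also have "\<dots> \<le> ennreal (2 * F0 / (sqrt (real b * real K) * sqrt (real T))
           + 2 * L * \<sigma>\<^sup>2 / (sqrt (real b * real K) * sqrt (real T))
           + 3 * L\<^sup>2 * real b * real K * (real I - 1) / real T * \<sigma>\<^sup>2
           + 5 * L\<^sup>2 * real b * real K * (real I - 1)\<^sup>2 / real T * \<zeta>\<^sup>2)"
  proof (rule ennreal_leI)
    show "1 / real T * (2 / \<eta> * W) \<le> 2 * F0 / (sqrt (real b * real K) * sqrt (real T))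
           + 2 * L * \<sigma>\<^sup>2 / (sqrt (real b * real K) * sqrt (real T))
           + 3 * L\<^sup>2 * real b * real K * (real I - 1) / real T * \<sigma>\<^sup>2
           + 5 * L\<^sup>2 * real b * real K * (real I - 1)\<^sup>2 / real T * \<zeta>\<^sup>2"
      unfolding W_def \<beta>_def C1_def
      by (rule final_real) (use b K Tp I L F0 eta_eq S0 in auto)
  qed
  finally show ?thesis unfolding LHS by (simp add: F0_def fs_def)
qed

end



theorem theoremB:
  fixes M :: "'m measure"
    and S :: "'b measure"
    and D :: "nat \<Rightarrow> 'b measure"
    and F :: "nat \<Rightarrow> 'a::euclidean_space \<Rightarrow> 'b \<Rightarrow> real"
    and G :: "nat \<Rightarrow> 'a \<Rightarrow> 'b \<Rightarrow> 'a"
    and f :: "nat \<Rightarrow> 'a \<Rightarrow> real"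
    and gf :: "nat \<Rightarrow> 'a \<Rightarrow> 'a"
    and \<xi> :: "nat \<Rightarrow> nat \<Rightarrow> nat \<Rightarrow> 'm \<Rightarrow> 'b"
    and K b I T :: nat
    and L \<sigma> \<zeta> \<eta> :: real
    and x1 :: 'a
  assumes K: "K \<ge> 1" and b: "b \<ge> 1" and I: "I \<ge> 1" and T: "T \<ge> 1"
    and TI: "I dvd T"
    and L: "L \<ge> 0"
    and eta: "\<eta> = sqrt (real b * real K / real T)"
    and Tbig: "real T \<ge> 81 * L\<^sup>2 * (real I)\<^sup>2 * real b * real K"
    \<comment> \<open>distributions of the local data\<close>
    and D_prob: "\<And>k. k < K \<Longrightarrow> prob_space (D k)"
    and D_sets: "\<And>k. k < K \<Longrightarrow> sets (D k) = sets S"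
    \<comment> \<open>stochastic losses f^(k)(x;xi), their gradients, and f^(k)(x) = E f^(k)(x;xi)\<close>
    and F_int: "\<And>k x. k < K \<Longrightarrow> integrable (D k) (F k x)"
    and f_def: "\<And>k x. k < K \<Longrightarrow> f k x = (\<integral>s. F k x s \<partial>D k)"
    and F_grad: "\<And>k x s. k < K \<Longrightarrow> s \<in> space S \<Longrightarrow>
                   ((\<lambda>z. F k z s) has_derivative (\<lambda>h. G k x s \<bullet> h)) (at x)"
    and G_meas: "\<And>k. k < K \<Longrightarrow> (\<lambda>p. G k (fst p) (snd p)) \<in> borel_measurable (borel \<Otimes>\<^sub>M S)"
    and f_grad: "\<And>k x. k < K \<Longrightarrow> (f k has_derivative (\<lambda>h. gf k x \<bullet> h)) (at x)"
    \<comment> \<open>f^* = inf f > -infinity\<close>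
    and f_bdd: "bdd_below (range (\<lambda>x. (1 / real K) * (\<Sum>k<K. f k x)))"
    \<comment> \<open>Assumption 1\<close>
    and A1: "\<And>k x y. k < K \<Longrightarrow>
       (\<integral>\<^sup>+ s. ennreal ((norm (G k x s - G k y s))\<^sup>2) \<partial>D k) \<le> ennreal (L\<^sup>2 * (norm (x - y))\<^sup>2)"
    \<comment> \<open>Assumption 2\<close>
    and A2_int: "\<And>k x. k < K \<Longrightarrow> integrable (D k) (G k x)"
    and A2_unb: "\<And>k x. k < K \<Longrightarrow> (\<integral>s. G k x s \<partial>D k) = gf k x"
    and A2_var: "\<And>k x. k < K \<Longrightarrow>
       (\<integral>\<^sup>+ s. ennreal ((norm (G k x s - gf k x))\<^sup>2) \<partial>D k) \<le> ennreal (\<sigma>\<^sup>2)"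
    and A2_het: "\<And>k l x. k < K \<Longrightarrow> l < K \<Longrightarrow> (norm (gf k x - gf l x))\<^sup>2 \<le> \<zeta>\<^sup>2"
    \<comment> \<open>i.i.d. samples, independent across nodes, times and minibatch slots\<close>
    and M_prob: "prob_space M"
    and indep: "prob_space.indep_vars M (\<lambda>_. S) (\<lambda>i. \<xi> (fst i) (fst (snd i)) (snd (snd i)))
                  ({1..T} \<times> {..<K} \<times> {..<b})"
    and distr: "\<And>t k j. t \<in> {1..T} \<Longrightarrow> k < K \<Longrightarrow> j < b \<Longrightarrow> distr M (D k) (\<xi> t k j) = D k"
  shows "ennreal (1 / real T) *
           (\<Sum>t\<in>{1..T}. \<integral>\<^sup>+ \<omega>. ennreal ((norm ((1 / real K) *\<^sub>R (\<Sum>k<K.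
               gf k (fedavg_avg G K b \<eta> I x1 (\<lambda>t k j. \<xi> t k j \<omega>) t))))\<^sup>2) \<partial>M)
         \<le> ennreal (
             2 * ((1 / real K) * (\<Sum>k<K. f k x1) - (INF x. (1 / real K) * (\<Sum>k<K. f k x)))
               / (sqrt (real b * real K) * sqrt (real T))
           + 2 * L * \<sigma>\<^sup>2 / (sqrt (real b * real K) * sqrt (real T))
           + 3 * L\<^sup>2 * real b * real K * (real I - 1) / real T * \<sigma>\<^sup>2
           + 5 * L\<^sup>2 * real b * real K * (real I - 1)\<^sup>2 / real T * \<zeta>\<^sup>2)"
  proof -
  have eta0: "\<eta> \<ge> 0" using eta by simp
  have Tp: "real T > 0" using T by simp
  have etaLI: "\<eta> * L * real I \<le> 1/9"
  proof -
    have "(\<eta> * L * real I)\<^sup>2 = real b * real K / real T * (L\<^sup>2 * (real I)\<^sup>2)"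
      using eta by (simp add: power_mult_distrib)
    also have "\<dots> = (81 * L\<^sup>2 * (real I)\<^sup>2 * real b * real K) / real T / 81"
      by (simp add: field_simps)
    also have "\<dots> \<le> real T / real T / 81"
      using Tbig Tp by (intro divide_right_mono) auto
    also have "\<dots> = (1/9)\<^sup>2" using Tp by (simp add: power2_eq_square)
    finally have "(\<eta> * L * real I)\<^sup>2 \<le> (1/9)\<^sup>2" .
    then show ?thesis by (rule power2_le_imp_le) simp
  qed
  have fedI: "fed S D G gf f K b I L \<sigma> \<zeta> \<eta>"
  proof (rule fed.intro)
    show "K \<ge> 1" "b \<ge> 1" "I \<ge> 1" "L \<ge> 0" "\<eta> \<ge> 0" "\<eta> * L * real I \<le> 1/9"
      using K b I L eta0 etaLI by auto
    show "\<And>k. k < K \<Longrightarrow> prob_space (D k)" by (rule D_prob)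
    show "\<And>k. k < K \<Longrightarrow> sets (D k) = sets S" by (rule D_sets)
    show "\<And>k. k < K \<Longrightarrow> (\<lambda>p. G k (fst p) (snd p)) \<in> borel_measurable (borel \<Otimes>\<^sub>M S)" by (rule G_meas)
    show "\<And>k x. k < K \<Longrightarrow> (f k has_derivative (\<lambda>h. gf k x \<bullet> h)) (at x)" by (rule f_grad)
    show "\<And>k x y. k < K \<Longrightarrow>
       (\<integral>\<^sup>+ s. ennreal ((norm (G k x s - G k y s))\<^sup>2) \<partial>D k) \<le> ennreal (L\<^sup>2 * (norm (x - y))\<^sup>2)" by (rule A1)
    show "\<And>k x. k < K \<Longrightarrow> integrable (D k) (G k x)" by (rule A2_int)
    show "\<And>k x. k < K \<Longrightarrow> (\<integral>s. G k x s \<partial>D k) = gf k x" by (rule A2_unb)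
    show "\<And>k x. k < K \<Longrightarrow>
       (\<integral>\<^sup>+ s. ennreal ((norm (G k x s - gf k x))\<^sup>2) \<partial>D k) \<le> ennreal (\<sigma>\<^sup>2)" by (rule A2_var)
    show "\<And>k l x. k < K \<Longrightarrow> l < K \<Longrightarrow> (norm (gf k x - gf l x))\<^sup>2 \<le> \<zeta>\<^sup>2" by (rule A2_het)
  qed
  have fedMI: "fedM S D G gf f K b I L \<sigma> \<zeta> \<eta> M \<xi> T"
  proof (rule fedM.intro[OF fedI], rule fedM_axioms.intro)
    show "prob_space M" by (rule M_prob)
    show "prob_space.indep_vars M (\<lambda>_. S) (\<lambda>i. \<xi> (fst i) (fst (snd i)) (snd (snd i))) ({1..T} \<times> {..<K} \<times> {..<b})"
      by (rule indep)
    show "\<And>t k j. t \<in> {1..T} \<Longrightarrow> k < K \<Longrightarrow> j < b \<Longrightarrow> distr M (D k) (\<xi> t k j) = D k"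
      by (rule distr)
  qed
  interpret FM: fedM S D G gf f K b I L \<sigma> \<zeta> \<eta> M \<xi> T x1 by (rule fedMI)
  have bdd: "bdd_below (range FM.Fb)" using f_bdd by (simp add: FM.Fb_def[abs_def])
  show ?thesis
    using FM.final_locale[OF T TI eta bdd] by (simp only: FM.Fb_def)
qed

end
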